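(* Let $r=1$, let $\{1,\psi_1,\psi_2,\dots\}$ be an orthonormal basis of $L_2(0,1)$ with $c_0=\sup_j\sup_x|\psi_j(x)|<\infty$, let $\gamma>1$, $C>0$, and let $X_1,\dots,X_n$ be i.i.d. with density $p\in\mathcal P(\gamma,C)$. Let $m=m_n=\lfloor n^{1/(2\gamma+1)}\rfloor$, $\hat\beta_j=n^{-1}\sum_{i=1}^n\psi_j(X_i)$, and let $\nu_1,\dots,\nu_m$ be i.i.d. (independent of $X$) with Laplace density $g(\nu)=\frac{n\alpha}{2c_0m}e^{-n\alpha|\nu|/(c_0m)}$. Define $\hat q(x)=1+\sum_{j=1}^m(\hat\beta_j+\nu_j)\psi_j(x)$, replaced by $\hat q(x)I(\hat q(x)>0)/\int_0^1\hat q(s)I(\hat q(s)>0)ds$ if $\hat q$ takes negative values. Let $Z=(Z_1,\dots,Z_k)$ be i.i.d. draws from $\hat q$ with $k\ge n$, and let $\hat p_Z(x)=1+\sum_{j=1}^m\big(k^{-1}\sum_{i=1}^k\psi_j(Z_i)\big)\psi_j(x)$ be the orthogonal series density estimator based on $Z$. Then $$\int_0^1(p(x)-\hat p_Z(x))^2dx=O_P\big(n^{-2\gamma/(2\gamma+1)}\big).$$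
   Context: Sobolev class: for $\gamma>1/2$, $C>0$, $\mathcal B(\gamma,C)=\{\beta=(\beta_1,\beta_2,\dots):\sum_{j\ge1}\beta_j^2j^{2\gamma}\le C^2\}$ and $\mathcal P(\gamma,C)=\{p=1+\sum_{j\ge1}\beta_j\psi_j:\beta\in\mathcal B(\gamma,C)\}$ (densities on $[0,1]$). $\alpha>0$ is fixed; $O_P$ refers to the joint law of $X$, the noise and $Z$. *)

theory Defs
  imports "HOL-Probability.Probability"
begin

definition onb01 :: "(nat \<Rightarrow> real \<Rightarrow> real) \<Rightarrow> bool" where
  "onb01 \<psi> \<longleftrightarrow>
     (\<forall>j\<ge>1. \<psi> j \<in> borel_measurable borel
             \<and> set_integrable lborel {0..1} (\<lambda>x. (\<psi> j x)\<^sup>2)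
             \<and> (\<integral>x\<in>{0..1}. \<psi> j x \<partial>lborel) = 0
             \<and> (\<forall>l\<ge>1. (\<integral>x\<in>{0..1}. \<psi> j x * \<psi> l x \<partial>lborel) = (if j = l then 1 else 0))) \<and>
     (\<forall>f. f \<in> borel_measurable borel \<and> set_integrable lborel {0..1} (\<lambda>x. (f x)\<^sup>2) \<longrightarrow>
        (\<lambda>N. \<integral>x\<in>{0..1}. (f x - (\<integral>s\<in>{0..1}. f s \<partial>lborel)
             - (\<Sum>j=1..N. (\<integral>s\<in>{0..1}. f s * \<psi> j s \<partial>lborel) * \<psi> j x))\<^sup>2 \<partial>lborel)
          \<longlonglongrightarrow> 0)"

definition c0_of :: "(nat \<Rightarrow> real \<Rightarrow> real) \<Rightarrow> real" where
  "c0_of \<psi> = Sup {\<bar>\<psi> j x\<bar> | j x. j \<ge> 1 \<and> x \<in> {0..1}}"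

text \<open>Sobolev ellipsoid B(gamma,C); beta j is the j-th coefficient, j >= 1 (beta 0 unused).\<close>
definition sobolev_B :: "real \<Rightarrow> real \<Rightarrow> (nat \<Rightarrow> real) \<Rightarrow> bool" where
  "sobolev_B \<gamma> C \<beta> \<longleftrightarrow>
     summable (\<lambda>j. (\<beta> (Suc j))\<^sup>2 * real (Suc j) powr (2 * \<gamma>)) \<and>
     (\<Sum>j. (\<beta> (Suc j))\<^sup>2 * real (Suc j) powr (2 * \<gamma>)) \<le> C\<^sup>2"

definition sobolev_P :: "(nat \<Rightarrow> real \<Rightarrow> real) \<Rightarrow> real \<Rightarrow> real \<Rightarrow> (real \<Rightarrow> real) set" where
  "sobolev_P \<psi> \<gamma> C = {p. p \<in> borel_measurable borel \<and> (\<forall>x\<in>{0..1}. p x \<ge> 0)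
      \<and> set_integrable lborel {0..1} (\<lambda>x. (p x)\<^sup>2)
      \<and> (\<integral>x\<in>{0..1}. p x \<partial>lborel) = 1
      \<and> (\<exists>\<beta>. sobolev_B \<gamma> C \<beta> \<and>
           (\<lambda>N. \<integral>x\<in>{0..1}. (p x - 1 - (\<Sum>j=1..N. \<beta> j * \<psi> j x))\<^sup>2 \<partial>lborel) \<longlonglongrightarrow> 0)}"

definition m_of :: "real \<Rightarrow> nat \<Rightarrow> nat" where
  "m_of \<gamma> n = nat \<lfloor>real n powr (1 / (2 * \<gamma> + 1))\<rfloor>"

definition dens01 :: "(real \<Rightarrow> real) \<Rightarrow> real measure" where
  "dens01 f = density lborel (\<lambda>x. ennreal (indicator {0..1} x * f x))"

definition laplace_dist :: "real \<Rightarrow> real \<Rightarrow> nat \<Rightarrow> nat \<Rightarrow> real measure" where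
  "laplace_dist \<alpha> c0 n m = density lborel
     (\<lambda>v. ennreal (real n * \<alpha> / (2 * c0 * real m) * exp (- (real n * \<alpha> * \<bar>v\<bar>) / (c0 * real m))))"

definition qhat :: "(nat \<Rightarrow> real \<Rightarrow> real) \<Rightarrow> nat \<Rightarrow> nat \<Rightarrow> (nat \<Rightarrow> real) \<Rightarrow> (nat \<Rightarrow> real) \<Rightarrow> real \<Rightarrow> real" where
  "qhat \<psi> m n X \<nu> y = 1 + (\<Sum>j=1..m. ((\<Sum>i=1..n. \<psi> j (X i)) / real n + \<nu> j) * \<psi> j y)"

definition qcorr :: "(real \<Rightarrow> real) \<Rightarrow> real \<Rightarrow> real" where
  "qcorr q = (if \<exists>y\<in>{0..1}. q y < 0
      then (\<lambda>y. q y * indicator {s. q s > 0} y / (\<integral>s\<in>{0..1}. q s * indicator {s. q s > 0} s \<partial>lborel))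
      else q)"

definition joint_law :: "(nat \<Rightarrow> real \<Rightarrow> real) \<Rightarrow> real \<Rightarrow> real \<Rightarrow> (real \<Rightarrow> real) \<Rightarrow> nat \<Rightarrow> nat
     \<Rightarrow> ((nat \<Rightarrow> real) \<times> (nat \<Rightarrow> real) \<times> (nat \<Rightarrow> real)) measure" where
  "joint_law \<psi> \<alpha> \<gamma> p n k =
    bind (PiM {1..n} (\<lambda>_. dens01 p)) (\<lambda>X.
    bind (PiM {1..m_of \<gamma> n} (\<lambda>_. laplace_dist \<alpha> (c0_of \<psi>) n (m_of \<gamma> n))) (\<lambda>\<nu>.
    bind (PiM {1..k} (\<lambda>_. dens01 (qcorr (qhat \<psi> (m_of \<gamma> n) n X \<nu>)))) (\<lambda>Z.
    return (PiM {1..n} (\<lambda>_. borel) \<Otimes>\<^sub>M (PiM {1..m_of \<gamma> n} (\<lambda>_. borel) \<Otimes>\<^sub>M PiM {1..k} (\<lambda>_. borel)))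
           (X, \<nu>, Z))))"

definition phatZ :: "(nat \<Rightarrow> real \<Rightarrow> real) \<Rightarrow> nat \<Rightarrow> nat \<Rightarrow> (nat \<Rightarrow> real) \<Rightarrow> real \<Rightarrow> real" where
  "phatZ \<psi> m k Z y = 1 + (\<Sum>j=1..m. ((\<Sum>i=1..k. \<psi> j (Z i)) / real k) * \<psi> j y)"

definition L2err01 :: "(real \<Rightarrow> real) \<Rightarrow> (real \<Rightarrow> real) \<Rightarrow> real" where
  "L2err01 p f = (\<integral>x\<in>{0..1}. (p x - f x)\<^sup>2 \<partial>lborel)"

end

theory Submission
  imports Defs
begin

definition N01 :: "real measure" where "N01 = restrict_space lborel {0..1}"

lemma space_N01[simp]: "space N01 = {0..1}"
  by (simp add: N01_def space_restrict_space)

lemma sets_N01_in: "{0..1::real} \<inter> space lborel \<in> sets lborel" by simp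

lemma meas_N01: "f \<in> borel_measurable borel \<Longrightarrow> f \<in> borel_measurable N01"
  unfolding N01_def by (rule measurable_restrict_space1) simp

lemma prob_space_N01: "prob_space N01"
proof
  show "emeasure N01 (space N01) = 1"
    unfolding N01_def by (simp add: emeasure_restrict_space space_restrict_space)
qed

interpretation N01: prob_space N01 by (rule prob_space_N01)

lemma prob_N01[simp]: "measure N01 {0..1} = 1"
  using N01.prob_space by simp

lemma set_integral_N01: fixes f :: "real \<Rightarrow> real" shows "(\<integral>x\<in>{0..1}. f x \<partial>lborel) = integral\<^sup>L N01 f"
  unfolding N01_def set_lebesgue_integral_def
  by (subst integral_restrict_space) auto

lemma set_integrable_N01: fixes f :: "real \<Rightarrow> real" shows "set_integrable lborel {0..1} f \<longleftrightarrow> integrable N01 f"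
  unfolding N01_def set_integrable_def
  by (subst integrable_restrict_space) auto

lemma L2_L1:
  fixes f g :: "real \<Rightarrow> real"
  assumes "f \<in> borel_measurable N01" "integrable N01 (\<lambda>x. (f x)\<^sup>2)"
  shows "integrable N01 f"
proof (rule Bochner_Integration.integrable_bound[where f="\<lambda>x. 1 + (f x)\<^sup>2"])
  show "integrable N01 (\<lambda>x. 1 + (f x)\<^sup>2)" using assms by auto
  show "AE x in N01. norm (f x) \<le> norm (1 + (f x)\<^sup>2)"
  proof (intro AE_I2)
    fix x have "2 * \<bar>f x\<bar> * 1 \<le> \<bar>f x\<bar>\<^sup>2 + 1\<^sup>2"
      by (rule sum_squares_bound)
    then have "\<bar>f x\<bar> \<le> 1 + (f x)\<^sup>2" by simp
    then show "norm (f x) \<le> norm (1 + (f x)\<^sup>2)" by simp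
  qed
qed (use assms in auto)

lemma L2_mult:
  fixes f g :: "real \<Rightarrow> real"
  assumes "f \<in> borel_measurable N01" "integrable N01 (\<lambda>x. (f x)\<^sup>2)"
      "g \<in> borel_measurable N01" "integrable N01 (\<lambda>x. (g x)\<^sup>2)"
  shows "integrable N01 (\<lambda>x. f x * g x)"
proof (rule Bochner_Integration.integrable_bound[where f="\<lambda>x. (f x)\<^sup>2 + (g x)\<^sup>2"])
  show "integrable N01 (\<lambda>x. (f x)\<^sup>2 + (g x)\<^sup>2)" using assms by auto
  show "AE x in N01. norm (f x * g x) \<le> norm ((f x)\<^sup>2 + (g x)\<^sup>2)"
  proof (intro AE_I2)
    fix x have "2 * \<bar>f x * g x\<bar> \<le> (f x)\<^sup>2 + (g x)\<^sup>2"
      using sum_squares_bound[of "\<bar>f x\<bar>" "\<bar>g x\<bar>"] by (simp add: abs_mult power2_abs)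
    then show "norm (f x * g x) \<le> norm ((f x)\<^sup>2 + (g x)\<^sup>2)" by simp
  qed
qed (use assms in auto)

lemma L2_add:
  fixes f g :: "real \<Rightarrow> real"
  assumes "f \<in> borel_measurable N01" "integrable N01 (\<lambda>x. (f x)\<^sup>2)"
      "g \<in> borel_measurable N01" "integrable N01 (\<lambda>x. (g x)\<^sup>2)"
  shows "integrable N01 (\<lambda>x. (f x + g x)\<^sup>2)"
proof -
  have "integrable N01 (\<lambda>x. ((f x)\<^sup>2 + (g x)\<^sup>2) + 2 * (f x * g x))"
    by (intro Bochner_Integration.integrable_add integrable_mult_right) (use assms L2_mult[OF assms] in auto)
  then show ?thesis by (simp add: power2_sum mult.assoc)
qed

lemma L2_diff:
  fixes f g :: "real \<Rightarrow> real"
  assumes "f \<in> borel_measurable N01" "integrable N01 (\<lambda>x. (f x)\<^sup>2)"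
      "g \<in> borel_measurable N01" "integrable N01 (\<lambda>x. (g x)\<^sup>2)"
  shows "integrable N01 (\<lambda>x. (f x - g x)\<^sup>2)"
proof -
  have "integrable N01 (\<lambda>x. (f x + (- g x))\<^sup>2)"
    by (rule L2_add) (use assms in auto)
  then show ?thesis by simp
qed

lemma L2_sum:
  fixes g :: "nat \<Rightarrow> real \<Rightarrow> real"
  assumes "finite J" "\<And>j. j \<in> J \<Longrightarrow> g j \<in> borel_measurable N01"
     "\<And>j. j \<in> J \<Longrightarrow> integrable N01 (\<lambda>x. (g j x)\<^sup>2)"
  shows "integrable N01 (\<lambda>x. (\<Sum>j\<in>J. g j x)\<^sup>2)"
  using assms
proof (induction J rule: finite_induct)
  case empty then show ?case by simp
next
  case (insert a J)
  then show ?case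
    by (simp add: sum.insert) (rule L2_add, auto)
qed

lemma L2_bounded:
  fixes f g :: "real \<Rightarrow> real"
  assumes "f \<in> borel_measurable N01" "\<And>x. x \<in> {0..1} \<Longrightarrow> \<bar>f x\<bar> \<le> B"
  shows "integrable N01 (\<lambda>x. (f x)\<^sup>2)"
proof (rule Bochner_Integration.integrable_bound[where f="\<lambda>x. B\<^sup>2"])
  show "AE x in N01. norm ((f x)\<^sup>2) \<le> norm (B\<^sup>2)"
  proof (intro AE_I2)
    fix x assume "x \<in> space N01"
    then have "\<bar>f x\<bar> \<le> B" using assms by auto
    then have "\<bar>f x\<bar>\<^sup>2 \<le> B\<^sup>2" by (intro power_mono) auto
    then have "(f x)\<^sup>2 \<le> B\<^sup>2" by simp
    then show "norm ((f x)\<^sup>2) \<le> norm (B\<^sup>2)" by simp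
  qed
qed (use assms in auto)

lemma jensen_N01:
  fixes f g :: "real \<Rightarrow> real"
  assumes "f \<in> borel_measurable N01" "integrable N01 (\<lambda>x. (f x)\<^sup>2)"
  shows "(integral\<^sup>L N01 f)\<^sup>2 \<le> integral\<^sup>L N01 (\<lambda>x. (f x)\<^sup>2)"
proof -
  have i: "integrable N01 f" using L2_L1 assms .
  let ?a = "integral\<^sup>L N01 f"
  have "0 \<le> integral\<^sup>L N01 (\<lambda>x. (f x - ?a)\<^sup>2)" by (intro integral_nonneg_AE) auto
  also have "integral\<^sup>L N01 (\<lambda>x. (f x - ?a)\<^sup>2) = integral\<^sup>L N01 (\<lambda>x. (f x)\<^sup>2 - 2 * ?a * f x + ?a\<^sup>2)"
    by (simp add: power2_diff algebra_simps)
  also have "\<dots> = integral\<^sup>L N01 (\<lambda>x. (f x)\<^sup>2) - 2 * ?a * ?a + ?a\<^sup>2"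
    using i assms by (simp add: N01.prob_space)
  finally show ?thesis by (simp add: power2_eq_square)
qed


locale onb =
  fixes \<psi> :: "nat \<Rightarrow> real \<Rightarrow> real" and c0 :: real
  assumes psi_meas: "\<And>j. j \<ge> 1 \<Longrightarrow> \<psi> j \<in> borel_measurable borel"
    and psi_bnd: "\<And>j x. j \<ge> 1 \<Longrightarrow> x \<in> {0..1} \<Longrightarrow> \<bar>\<psi> j x\<bar> \<le> c0"
    and psi_orth: "\<And>j l. j \<ge> 1 \<Longrightarrow> l \<ge> 1 \<Longrightarrow>
          integral\<^sup>L N01 (\<lambda>x. \<psi> j x * \<psi> l x) = (if j = l then 1 else 0)"
    and psi_mean: "\<And>j. j \<ge> 1 \<Longrightarrow> integral\<^sup>L N01 (\<psi> j) = 0"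
begin

lemma psiN: "j \<ge> 1 \<Longrightarrow> \<psi> j \<in> borel_measurable N01"
  using psi_meas meas_N01 by blast

lemma psi_L2: "j \<ge> 1 \<Longrightarrow> integrable N01 (\<lambda>x. (\<psi> j x)\<^sup>2)"
  by (rule L2_bounded[OF psiN psi_bnd])

lemma psi_int: "j \<ge> 1 \<Longrightarrow> integrable N01 (\<psi> j)"
  by (rule L2_L1[OF psiN psi_L2])

lemma psi_mult_int:
  fixes f :: "real \<Rightarrow> real"
  assumes "f \<in> borel_measurable N01" "integrable N01 (\<lambda>x. (f x)\<^sup>2)" "j \<ge> 1"
  shows "integrable N01 (\<lambda>x. f x * \<psi> j x)"
  by (rule L2_mult[OF assms(1,2) psiN psi_L2]) (use assms in auto)

lemma S_meas:
  assumes "\<forall>j\<in>J. j \<ge> 1"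
  shows "(\<lambda>x. \<Sum>j\<in>J. c j * \<psi> j x) \<in> borel_measurable N01"
  by (intro borel_measurable_sum borel_measurable_times borel_measurable_const psiN) (use assms in auto)

lemma S_L2:
  assumes "finite J" "\<forall>j\<in>J. j \<ge> 1"
  shows "integrable N01 (\<lambda>x. (\<Sum>j\<in>J. c j * \<psi> j x)\<^sup>2)"
proof (rule L2_sum[OF assms(1)])
  fix j assume j: "j \<in> J"
  then show "(\<lambda>x. c j * \<psi> j x) \<in> borel_measurable N01" using assms psiN by auto
  have "integrable N01 (\<lambda>x. (c j)\<^sup>2 * (\<psi> j x)\<^sup>2)" using j assms psi_L2 by auto
  then show "integrable N01 (\<lambda>x. (c j * \<psi> j x)\<^sup>2)" by (simp add: power_mult_distrib)
qed

lemma expand: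
  fixes f :: "real \<Rightarrow> real"
  assumes f: "f \<in> borel_measurable N01" "integrable N01 (\<lambda>x. (f x)\<^sup>2)"
    and J: "finite J" "\<forall>j\<in>J. j \<ge> 1"
  shows "integral\<^sup>L N01 (\<lambda>x. (f x - (\<Sum>j\<in>J. c j * \<psi> j x))\<^sup>2) =
      integral\<^sup>L N01 (\<lambda>x. (f x)\<^sup>2) - 2 * (\<Sum>j\<in>J. c j * integral\<^sup>L N01 (\<lambda>x. f x * \<psi> j x))
      + (\<Sum>j\<in>J. (c j)\<^sup>2)"
proof -
  have eq: "\<And>x. (f x - (\<Sum>j\<in>J. c j * \<psi> j x))\<^sup>2 = (f x)\<^sup>2 - 2 * (\<Sum>j\<in>J. c j * (f x * \<psi> j x))
       + (\<Sum>j\<in>J. \<Sum>l\<in>J. c j * c l * (\<psi> j x * \<psi> l x))"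
  proof -
    fix x
    have sq: "\<And>a b::real. (a - b)\<^sup>2 = a\<^sup>2 - 2 * (a * b) + b * b"
      by (simp add: power2_eq_square algebra_simps)
    have a: "f x * (\<Sum>j\<in>J. c j * \<psi> j x) = (\<Sum>j\<in>J. c j * (f x * \<psi> j x))"
      by (simp add: sum_distrib_left mult_ac)
    have b: "(\<Sum>j\<in>J. c j * \<psi> j x) * (\<Sum>j\<in>J. c j * \<psi> j x) =
       (\<Sum>j\<in>J. \<Sum>l\<in>J. c j * c l * (\<psi> j x * \<psi> l x))"
      by (simp add: sum_product mult_ac)
    show "(f x - (\<Sum>j\<in>J. c j * \<psi> j x))\<^sup>2 = (f x)\<^sup>2 - 2 * (\<Sum>j\<in>J. c j * (f x * \<psi> j x))
       + (\<Sum>j\<in>J. \<Sum>l\<in>J. c j * c l * (\<psi> j x * \<psi> l x))"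
      unfolding sq a b ..
  qed
  have i1: "\<And>j. j \<in> J \<Longrightarrow> integrable N01 (\<lambda>x. f x * \<psi> j x)"
    using psi_mult_int[OF f] J by auto
  have i2: "\<And>j l. j \<in> J \<Longrightarrow> l \<in> J \<Longrightarrow> integrable N01 (\<lambda>x. \<psi> j x * \<psi> l x)"
    using psi_mult_int[OF psiN psi_L2] J by auto
  have "integral\<^sup>L N01 (\<lambda>x. (f x - (\<Sum>j\<in>J. c j * \<psi> j x))\<^sup>2) =
     integral\<^sup>L N01 (\<lambda>x. (f x)\<^sup>2) - 2 * (\<Sum>j\<in>J. c j * integral\<^sup>L N01 (\<lambda>x. f x * \<psi> j x))
       + (\<Sum>j\<in>J. \<Sum>l\<in>J. c j * c l * integral\<^sup>L N01 (\<lambda>x. \<psi> j x * \<psi> l x))"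
    unfolding eq using f i1 i2
    by (simp add: Bochner_Integration.integral_diff Bochner_Integration.integral_add
        Bochner_Integration.integrable_diff Bochner_Integration.integrable_add
        Bochner_Integration.integral_sum integral_mult_right_zero)
  also have "(\<Sum>j\<in>J. \<Sum>l\<in>J. c j * c l * integral\<^sup>L N01 (\<lambda>x. \<psi> j x * \<psi> l x)) = (\<Sum>j\<in>J. (c j)\<^sup>2)"
  proof (rule sum.cong[OF refl])
    fix j assume j: "j \<in> J"
    have "(\<Sum>l\<in>J. c j * c l * integral\<^sup>L N01 (\<lambda>x. \<psi> j x * \<psi> l x)) = (\<Sum>l\<in>J. if j = l then c j * c l else 0)"
      using J j by (intro sum.cong) (auto simp: psi_orth)
    also have "\<dots> = (c j)\<^sup>2" using J j by (simp add: power2_eq_square)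
    finally show "(\<Sum>l\<in>J. c j * c l * integral\<^sup>L N01 (\<lambda>x. \<psi> j x * \<psi> l x)) = (c j)\<^sup>2" .
  qed
  finally show ?thesis .
qed

lemma bessel:
  fixes f :: "real \<Rightarrow> real"
  assumes f: "f \<in> borel_measurable N01" "integrable N01 (\<lambda>x. (f x)\<^sup>2)"
    and J: "finite J" "\<forall>j\<in>J. j \<ge> 1"
  shows "(\<Sum>j\<in>J. (integral\<^sup>L N01 (\<lambda>x. f x * \<psi> j x))\<^sup>2) \<le> integral\<^sup>L N01 (\<lambda>x. (f x)\<^sup>2)"
proof -
  let ?c = "\<lambda>j. integral\<^sup>L N01 (\<lambda>x. f x * \<psi> j x)"
  have "0 \<le> integral\<^sup>L N01 (\<lambda>x. (f x - (\<Sum>j\<in>J. ?c j * \<psi> j x))\<^sup>2)"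
    by (intro integral_nonneg_AE) auto
  also have "\<dots> = integral\<^sup>L N01 (\<lambda>x. (f x)\<^sup>2) - (\<Sum>j\<in>J. (?c j)\<^sup>2)"
    unfolding expand[OF f J] by (simp add: sum_distrib_left power2_eq_square)
  finally show ?thesis by simp
qed

end

context onb begin

lemma ip_S:
  assumes J: "finite J" "\<forall>j\<in>J. j \<ge> 1" and l: "l \<ge> 1"
  shows "integral\<^sup>L N01 (\<lambda>x. (\<Sum>j\<in>J. c j * \<psi> j x) * \<psi> l x) = (if l \<in> J then c l else 0)"
proof -
  have "integral\<^sup>L N01 (\<lambda>x. (\<Sum>j\<in>J. c j * \<psi> j x) * \<psi> l x) =
        integral\<^sup>L N01 (\<lambda>x. (\<Sum>j\<in>J. c j * (\<psi> j x * \<psi> l x)))"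
  proof -
    have "\<And>x. (\<Sum>j\<in>J. c j * \<psi> j x) * \<psi> l x = (\<Sum>j\<in>J. c j * (\<psi> j x * \<psi> l x))"
      by (simp add: sum_distrib_right mult.assoc)
    then show ?thesis by (simp only:)
  qed
  also have "\<dots> = (\<Sum>j\<in>J. c j * integral\<^sup>L N01 (\<lambda>x. \<psi> j x * \<psi> l x))"
    using J l psi_mult_int[OF psiN psi_L2]
    by (subst Bochner_Integration.integral_sum) auto
  also have "\<dots> = (\<Sum>j\<in>J. if j = l then c l else 0)"
    using J l by (intro sum.cong) (auto simp: psi_orth)
  also have "\<dots> = (if l \<in> J then c l else 0)" using J by (simp add: sum.delta')
  finally show ?thesis .
qed

end

locale sob = onb +
  fixes p :: "real \<Rightarrow> real" and \<beta> :: "nat \<Rightarrow> real" and \<gamma> C :: real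
  assumes p_meas: "p \<in> borel_measurable borel"
    and p_nonneg: "\<And>x. x \<in> {0..1} \<Longrightarrow> 0 \<le> p x"
    and p_L2: "integrable N01 (\<lambda>x. (p x)\<^sup>2)"
    and p_int1: "integral\<^sup>L N01 p = 1"
    and sobB: "sobolev_B \<gamma> C \<beta>"
    and conv: "(\<lambda>N. integral\<^sup>L N01 (\<lambda>x. (p x - 1 - (\<Sum>j=1..N. \<beta> j * \<psi> j x))\<^sup>2)) \<longlonglongrightarrow> 0"
    and gamma_pos: "\<gamma> > 0"
begin

lemma pN: "p \<in> borel_measurable N01" using p_meas meas_N01 by blast

lemma p1N: "(\<lambda>x. p x - 1) \<in> borel_measurable N01" using pN by auto

lemma p1_L2: "integrable N01 (\<lambda>x. (p x - 1)\<^sup>2)"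
  using L2_diff[OF pN p_L2, of "\<lambda>_. 1"] by simp

lemma p_int: "integrable N01 p" using L2_L1[OF pN p_L2] .

lemma p_psi_int: "j \<ge> 1 \<Longrightarrow> integrable N01 (\<lambda>x. p x * \<psi> j x)"
  using psi_mult_int[OF pN p_L2] .

lemma beta_eq: assumes j: "j \<ge> 1" shows "\<beta> j = integral\<^sup>L N01 (\<lambda>x. p x * \<psi> j x)"
proof -
  let ?g = "\<lambda>N x. p x - 1 - (\<Sum>j=1..N. \<beta> j * \<psi> j x)"
  let ?d = "integral\<^sup>L N01 (\<lambda>x. p x * \<psi> j x) - \<beta> j"
  have "?d\<^sup>2 \<le> 0"
  proof (rule LIMSEQ_le_const[OF conv], intro exI allI impI)
    fix N assume N: "j \<le> N"
    have gm: "?g N \<in> borel_measurable N01"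
      using p1N S_meas[of "{1..N}" \<beta>] by auto
    have gL2: "integrable N01 (\<lambda>x. (?g N x)\<^sup>2)"
      using L2_diff[OF p1N p1_L2 S_meas[of "{1..N}" \<beta>] S_L2[of "{1..N}" \<beta>]] by auto
    have "integral\<^sup>L N01 (\<lambda>x. ?g N x * \<psi> j x) =
       integral\<^sup>L N01 (\<lambda>x. p x * \<psi> j x - \<psi> j x - (\<Sum>l=1..N. \<beta> l * \<psi> l x) * \<psi> j x)"
      by (simp add: algebra_simps)
    also have "\<dots> = integral\<^sup>L N01 (\<lambda>x. p x * \<psi> j x) - integral\<^sup>L N01 (\<psi> j)
        - integral\<^sup>L N01 (\<lambda>x. (\<Sum>l=1..N. \<beta> l * \<psi> l x) * \<psi> j x)"
      using p_psi_int[OF j] psi_int[OF j] psi_mult_int[OF S_meas[of "{1..N}" \<beta>] S_L2[of "{1..N}" \<beta>] j]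
      by simp
    also have "\<dots> = ?d" using j N by (simp add: ip_S psi_mean)
    finally have "?d = integral\<^sup>L N01 (\<lambda>x. ?g N x * \<psi> j x)" by simp
    then have "?d\<^sup>2 = (\<Sum>l\<in>{j}. (integral\<^sup>L N01 (\<lambda>x. ?g N x * \<psi> l x))\<^sup>2)" by simp
    also have "\<dots> \<le> integral\<^sup>L N01 (\<lambda>x. (?g N x)\<^sup>2)"
      by (rule bessel[OF gm gL2]) (use j in auto)
    finally show "?d\<^sup>2 \<le> integral\<^sup>L N01 (\<lambda>x. (?g N x)\<^sup>2)" .
  qed
  then show ?thesis by simp
qed

lemma beta_eq1: assumes j: "j \<ge> 1" shows "integral\<^sup>L N01 (\<lambda>x. (p x - 1) * \<psi> j x) = \<beta> j"
proof -
  have "integral\<^sup>L N01 (\<lambda>x. (p x - 1) * \<psi> j x) = integral\<^sup>L N01 (\<lambda>x. p x * \<psi> j x - \<psi> j x)"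
    by (simp add: algebra_simps)
  also have "\<dots> = \<beta> j" using p_psi_int[OF j] psi_int[OF j] beta_eq[OF j] psi_mean[OF j] by simp
  finally show ?thesis .
qed

definition T :: "nat \<Rightarrow> real" where
  "T m = integral\<^sup>L N01 (\<lambda>x. (p x - 1 - (\<Sum>j=1..m. \<beta> j * \<psi> j x))\<^sup>2)"

lemma err_formula:
  "integral\<^sup>L N01 (\<lambda>x. (p x - 1 - (\<Sum>j=1..m. c j * \<psi> j x))\<^sup>2) = T m + (\<Sum>j=1..m. (c j - \<beta> j)\<^sup>2)"
proof -
  have J: "finite {1..m}" "\<forall>j\<in>{1..m}. j \<ge> 1" by auto
  have e: "\<And>c. integral\<^sup>L N01 (\<lambda>x. (p x - 1 - (\<Sum>j=1..m. c j * \<psi> j x))\<^sup>2) =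
     integral\<^sup>L N01 (\<lambda>x. (p x - 1)\<^sup>2) - 2 * (\<Sum>j=1..m. c j * \<beta> j) + (\<Sum>j=1..m. (c j)\<^sup>2)"
  proof -
    fix c
    have "(\<Sum>j=1..m. c j * integral\<^sup>L N01 (\<lambda>x. (p x - 1) * \<psi> j x)) = (\<Sum>j=1..m. c j * \<beta> j)"
      by (intro sum.cong) (auto simp: beta_eq1)
    then show "integral\<^sup>L N01 (\<lambda>x. (p x - 1 - (\<Sum>j=1..m. c j * \<psi> j x))\<^sup>2) =
     integral\<^sup>L N01 (\<lambda>x. (p x - 1)\<^sup>2) - 2 * (\<Sum>j=1..m. c j * \<beta> j) + (\<Sum>j=1..m. (c j)\<^sup>2)"
      using expand[OF p1N p1_L2 J, of c] by simp
  qed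
  show ?thesis unfolding T_def e
    by (simp add: power2_diff sum.distrib sum_subtractf sum_distrib_left power2_eq_square algebra_simps)
qed

lemma T_eq: "T m = integral\<^sup>L N01 (\<lambda>x. (p x - 1)\<^sup>2) - (\<Sum>j=1..m. (\<beta> j)\<^sup>2)"
proof -
  have J: "finite {1..m}" "\<forall>j\<in>{1..m}. j \<ge> 1" by auto
  have "(\<Sum>j=1..m. \<beta> j * integral\<^sup>L N01 (\<lambda>x. (p x - 1) * \<psi> j x)) = (\<Sum>j=1..m. (\<beta> j)\<^sup>2)"
    by (intro sum.cong) (auto simp: beta_eq1 power2_eq_square)
  then show ?thesis unfolding T_def
    using expand[OF p1N p1_L2 J, of \<beta>] by simp
qed

lemma T_nonneg: "0 \<le> T m" unfolding T_def by (intro integral_nonneg_AE) auto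

lemma partial_lim: "(\<lambda>N. \<Sum>j=1..N. (\<beta> j)\<^sup>2) \<longlonglongrightarrow> integral\<^sup>L N01 (\<lambda>x. (p x - 1)\<^sup>2)"
proof -
  have "(\<lambda>N. integral\<^sup>L N01 (\<lambda>x. (p x - 1)\<^sup>2) - T N) \<longlonglongrightarrow> integral\<^sup>L N01 (\<lambda>x. (p x - 1)\<^sup>2) - 0"
    using conv unfolding T_def[symmetric] by (intro tendsto_intros)
  then show ?thesis by (simp add: T_eq)
qed

lemma sobsum_bound: "(\<Sum>j=1..N. (\<beta> j)\<^sup>2 * real j powr (2 * \<gamma>)) \<le> C\<^sup>2"
proof -
  have s: "summable (\<lambda>j. (\<beta> (Suc j))\<^sup>2 * real (Suc j) powr (2 * \<gamma>))"
    and le: "(\<Sum>j. (\<beta> (Suc j))\<^sup>2 * real (Suc j) powr (2 * \<gamma>)) \<le> C\<^sup>2"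
    using sobB unfolding sobolev_B_def by auto
  have "(\<Sum>j=1..N. (\<beta> j)\<^sup>2 * real j powr (2 * \<gamma>)) = (\<Sum>j<N. (\<beta> (Suc j))\<^sup>2 * real (Suc j) powr (2 * \<gamma>))"
    by (rule sum_bounds_lt_plus1[symmetric])
  also have "\<dots> \<le> (\<Sum>j. (\<beta> (Suc j))\<^sup>2 * real (Suc j) powr (2 * \<gamma>))"
    by (rule sum_le_suminf[OF s]) auto
  finally show ?thesis using le by linarith
qed

lemma p1_norm: "integral\<^sup>L N01 (\<lambda>x. (p x - 1)\<^sup>2) \<le> C\<^sup>2"
proof (rule LIMSEQ_le_const2[OF partial_lim], intro exI allI impI)
  fix N :: nat
  have "(\<Sum>j=1..N. (\<beta> j)\<^sup>2) \<le> (\<Sum>j=1..N. (\<beta> j)\<^sup>2 * real j powr (2 * \<gamma>))"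
  proof (rule sum_mono)
    fix j assume "j \<in> {1..N}"
    then have "1 \<le> real j powr (2 * \<gamma>)" using gamma_pos by (intro ge_one_powr_ge_zero) auto
    from mult_left_mono[OF this zero_le_power2[of "\<beta> j"]]
    show "(\<beta> j)\<^sup>2 \<le> (\<beta> j)\<^sup>2 * real j powr (2 * \<gamma>)" by simp
  qed
  then show "(\<Sum>j=1..N. (\<beta> j)\<^sup>2) \<le> C\<^sup>2" using sobsum_bound[of N] by linarith
qed

lemma p_norm: "integral\<^sup>L N01 (\<lambda>x. (p x)\<^sup>2) \<le> 1 + C\<^sup>2"
proof -
  have "integral\<^sup>L N01 (\<lambda>x. (p x - 1)\<^sup>2) = integral\<^sup>L N01 (\<lambda>x. (p x)\<^sup>2 - 2 * p x + 1)"
    by (rule Bochner_Integration.integral_cong) (auto simp: power2_diff)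
  also have "\<dots> = integral\<^sup>L N01 (\<lambda>x. (p x)\<^sup>2) - 1"
    using p_L2 p_int p_int1 by (simp add: N01.prob_space)
  finally show ?thesis using p1_norm by linarith
qed

lemma T_bound:
  assumes m: "m \<ge> 1"
  shows "T m \<le> C\<^sup>2 / real m powr (2 * \<gamma>)"
proof -
  have mp: "0 < real m powr (2 * \<gamma>)" using m by simp
  have "(\<lambda>N. (\<Sum>j=1..N. (\<beta> j)\<^sup>2) - (\<Sum>j=1..m. (\<beta> j)\<^sup>2)) \<longlonglongrightarrow> T m"
    unfolding T_eq by (intro tendsto_intros partial_lim)
  then show ?thesis
  proof (rule LIMSEQ_le_const2, intro exI allI impI)
    fix N assume N: "m \<le> N"
    have split: "{1..N} = {1..m} \<union> {m<..N}" using N m by auto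
    have "(\<Sum>j=1..N. (\<beta> j)\<^sup>2) - (\<Sum>j=1..m. (\<beta> j)\<^sup>2) = (\<Sum>j\<in>{m<..N}. (\<beta> j)\<^sup>2)"
      unfolding split by (subst sum.union_disjoint) (auto simp del: atLeastAtMost_iff greaterThanAtMost_iff, auto)
    also have "\<dots> \<le> (\<Sum>j\<in>{m<..N}. (\<beta> j)\<^sup>2 * real j powr (2 * \<gamma>) / real m powr (2 * \<gamma>))"
    proof (rule sum_mono)
      fix j assume j: "j \<in> {m<..N}"
      have "real m powr (2 * \<gamma>) \<le> real j powr (2 * \<gamma>)"
        using j m gamma_pos by (intro powr_mono2) auto
      then have "1 \<le> real j powr (2 * \<gamma>) / real m powr (2 * \<gamma>)" using mp by simp
      then have "(\<beta> j)\<^sup>2 * 1 \<le> (\<beta> j)\<^sup>2 * (real j powr (2 * \<gamma>) / real m powr (2 * \<gamma>))"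
        by (intro mult_left_mono) auto
      then show "(\<beta> j)\<^sup>2 \<le> (\<beta> j)\<^sup>2 * real j powr (2 * \<gamma>) / real m powr (2 * \<gamma>)" by simp
    qed
    also have "\<dots> = (\<Sum>j\<in>{m<..N}. (\<beta> j)\<^sup>2 * real j powr (2 * \<gamma>)) / real m powr (2 * \<gamma>)"
      by (simp add: sum_divide_distrib)
    also have "\<dots> \<le> C\<^sup>2 / real m powr (2 * \<gamma>)"
    proof (rule divide_right_mono)
      have "(\<Sum>j\<in>{m<..N}. (\<beta> j)\<^sup>2 * real j powr (2 * \<gamma>)) \<le> (\<Sum>j=1..N. (\<beta> j)\<^sup>2 * real j powr (2 * \<gamma>))"
        using m by (intro sum_mono2) auto
      then show "(\<Sum>j\<in>{m<..N}. (\<beta> j)\<^sup>2 * real j powr (2 * \<gamma>)) \<le> C\<^sup>2" using sobsum_bound[of N] by linarith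
    qed (use mp in auto)
    finally show "(\<Sum>j=1..N. (\<beta> j)\<^sup>2) - (\<Sum>j=1..m. (\<beta> j)\<^sup>2) \<le> C\<^sup>2 / real m powr (2 * \<gamma>)" .
  qed
qed

end

lemma prod_sf: "prob_space Q \<Longrightarrow> product_sigma_finite (\<lambda>_::nat. Q)"
  unfolding product_sigma_finite_def using prob_space_imp_sigma_finite by blast

lemma bounded_int:
  fixes h :: "real \<Rightarrow> real"
  assumes "prob_space Q" "h \<in> borel_measurable Q" "AE x in Q. \<bar>h x\<bar> \<le> B"
  shows "integrable Q h"
proof -
  interpret Q: prob_space Q by fact
  show ?thesis
    by (rule Bochner_Integration.integrable_bound[where f="\<lambda>_. B"]) (use assms in auto)
qed

lemma prod_int1:
  fixes u :: "real \<Rightarrow> real" and I :: "nat set"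
  assumes Q: "prob_space Q" and I: "finite I" "i \<in> I" and u: "integrable Q u"
  shows "integrable (PiM I (\<lambda>_. Q)) (\<lambda>z. u (z i))"
    "integral\<^sup>L (PiM I (\<lambda>_. Q)) (\<lambda>z. u (z i)) = integral\<^sup>L Q u"
proof -
  interpret Q: prob_space Q by fact
  interpret P: product_sigma_finite "\<lambda>_::nat. Q" by (rule prod_sf[OF Q])
  define F where "F = (\<lambda>t. if t = i then u else (\<lambda>_. 1::real))"
  let ?F = F
  have eq: "\<And>z. (\<Prod>t\<in>I. ?F t (z t)) = u (z i)"
    using I by (subst prod.remove[of I i]) (auto simp: F_def)
  have ints: "\<And>t. t \<in> I \<Longrightarrow> integrable Q (?F t)" using u by (auto simp: F_def)
  show "integrable (PiM I (\<lambda>_. Q)) (\<lambda>z. u (z i))"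
    using P.product_integrable_prod[where f=F, OF I(1) ints] unfolding eq .
  have "integral\<^sup>L (PiM I (\<lambda>_. Q)) (\<lambda>z. (\<Prod>t\<in>I. ?F t (z t))) = (\<Prod>t\<in>I. integral\<^sup>L Q (?F t))"
    by (rule P.product_integral_prod[OF I(1) ints])
  also have "\<dots> = integral\<^sup>L Q u"
    using I by (subst prod.remove[of I i]) (auto simp: Q.prob_space F_def)
  finally show "integral\<^sup>L (PiM I (\<lambda>_. Q)) (\<lambda>z. u (z i)) = integral\<^sup>L Q u" unfolding eq .
qed

lemma prod_int2:
  fixes u v :: "real \<Rightarrow> real" and I :: "nat set"
  assumes Q: "prob_space Q" and I: "finite I" "i \<in> I" "l \<in> I" "i \<noteq> l"
    and u: "integrable Q u" and v: "integrable Q v"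
  shows "integrable (PiM I (\<lambda>_. Q)) (\<lambda>z. u (z i) * v (z l))"
    "integral\<^sup>L (PiM I (\<lambda>_. Q)) (\<lambda>z. u (z i) * v (z l)) = integral\<^sup>L Q u * integral\<^sup>L Q v"
proof -
  interpret Q: prob_space Q by fact
  interpret P: product_sigma_finite "\<lambda>_::nat. Q" by (rule prod_sf[OF Q])
  define F where "F = (\<lambda>t. if t = i then u else if t = l then v else (\<lambda>_. 1::real))"
  let ?F = F
  have eq: "\<And>z. (\<Prod>t\<in>I. ?F t (z t)) = u (z i) * v (z l)"
  proof -
    fix z
    have "(\<Prod>t\<in>I. ?F t (z t)) = u (z i) * (\<Prod>t\<in>I - {i}. ?F t (z t))"
      using I by (subst prod.remove[of I i]) (auto simp: F_def)
    also have "(\<Prod>t\<in>I - {i}. ?F t (z t)) = v (z l) * (\<Prod>t\<in>I - {i} - {l}. ?F t (z t))"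
      using I by (subst prod.remove[of "I - {i}" l]) (auto simp: F_def)
    also have "(\<Prod>t\<in>I - {i} - {l}. ?F t (z t)) = 1" by (intro prod.neutral) (auto simp: F_def)
    finally show "(\<Prod>t\<in>I. ?F t (z t)) = u (z i) * v (z l)" by simp
  qed
  have ints: "\<And>t. t \<in> I \<Longrightarrow> integrable Q (?F t)" using u v by (auto simp: F_def)
  show "integrable (PiM I (\<lambda>_. Q)) (\<lambda>z. u (z i) * v (z l))"
    using P.product_integrable_prod[where f=F, OF I(1) ints] unfolding eq .
  have "integral\<^sup>L (PiM I (\<lambda>_. Q)) (\<lambda>z. (\<Prod>t\<in>I. ?F t (z t))) = (\<Prod>t\<in>I. integral\<^sup>L Q (?F t))"
    by (rule P.product_integral_prod[OF I(1) ints])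
  also have "\<dots> = integral\<^sup>L Q u * ((\<Prod>t\<in>I - {i}. integral\<^sup>L Q (?F t)))"
    using I by (subst prod.remove[of I i]) (auto simp: F_def)
  also have "(\<Prod>t\<in>I - {i}. integral\<^sup>L Q (?F t)) = integral\<^sup>L Q v * (\<Prod>t\<in>I - {i} - {l}. integral\<^sup>L Q (?F t))"
    using I by (subst prod.remove[of "I - {i}" l]) (auto simp: F_def)
  also have "(\<Prod>t\<in>I - {i} - {l}. integral\<^sup>L Q (?F t)) = 1" by (intro prod.neutral) (auto simp: Q.prob_space F_def)
  finally show "integral\<^sup>L (PiM I (\<lambda>_. Q)) (\<lambda>z. u (z i) * v (z l)) = integral\<^sup>L Q u * integral\<^sup>L Q v"
    unfolding eq by simp
qed

lemma sum_if_const: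
  fixes a b :: real
  assumes "finite I" "i \<in> I"
  shows "(\<Sum>l\<in>I. if i = l then a else b) = a + (real (card I) - 1) * b"
proof -
  have "(\<Sum>l\<in>I. if i = l then a else b) = (\<Sum>l\<in>I. b + (if i = l then a - b else 0))"
    by (intro sum.cong) auto
  also have "\<dots> = real (card I) * b + (a - b)" using assms by (simp add: sum.distrib)
  finally show ?thesis by (simp add: algebra_simps)
qed

lemma var_bound:
  fixes h :: "real \<Rightarrow> real" and I :: "nat set"
  assumes Q: "prob_space Q" and hm: "h \<in> borel_measurable Q" and hb: "AE x in Q. \<bar>h x\<bar> \<le> B"
    and I: "finite I" "I \<noteq> {}"
  shows "integrable (PiM I (\<lambda>_. Q)) (\<lambda>z. ((\<Sum>i\<in>I. h (z i)) / real (card I) - t)\<^sup>2)"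
    "integral\<^sup>L (PiM I (\<lambda>_. Q)) (\<lambda>z. ((\<Sum>i\<in>I. h (z i)) / real (card I) - t)\<^sup>2)
       \<le> B\<^sup>2 / real (card I) + (integral\<^sup>L Q h - t)\<^sup>2"
proof -
  interpret Q: prob_space Q by fact
  let ?K = "real (card I)"
  have K: "?K > 0" using I by (simp add: card_gt_0_iff)
  define g where "g x = h x - t" for x
  have gm: "g \<in> borel_measurable Q" unfolding g_def using hm by auto
  have hi: "integrable Q h" by (rule bounded_int[OF Q hm hb])
  have hbb: "AE x in Q. \<bar>h x * h x\<bar> \<le> B * B"
    using hb by eventually_elim (subst abs_mult, rule mult_mono, auto)
  have h2i: "integrable Q (\<lambda>x. h x * h x)" by (rule bounded_int[OF Q _ hbb]) (use hm in auto)
  have gi: "integrable Q g" unfolding g_def using hi by auto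
  have g2i: "integrable Q (\<lambda>x. g x * g x)" unfolding g_def using hi h2i
    by (simp add: algebra_simps)
  let ?a = "integral\<^sup>L Q (\<lambda>x. g x * g x)" and ?b = "(integral\<^sup>L Q g)\<^sup>2"
  have eqz: "\<And>z. ((\<Sum>i\<in>I. h (z i)) / ?K - t)\<^sup>2 = (\<Sum>i\<in>I. \<Sum>l\<in>I. g (z i) * g (z l)) / ?K\<^sup>2"
  proof -
    fix z
    have "(\<Sum>i\<in>I. h (z i)) / ?K - t = (\<Sum>i\<in>I. g (z i)) / ?K"
      using K by (simp add: g_def sum_subtractf field_simps)
    then show "((\<Sum>i\<in>I. h (z i)) / ?K - t)\<^sup>2 = (\<Sum>i\<in>I. \<Sum>l\<in>I. g (z i) * g (z l)) / ?K\<^sup>2"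
      by (simp add: power_divide power2_eq_square sum_product)
  qed
  have trm: "\<And>i l. i \<in> I \<Longrightarrow> l \<in> I \<Longrightarrow>
      integrable (PiM I (\<lambda>_. Q)) (\<lambda>z. g (z i) * g (z l)) \<and>
      integral\<^sup>L (PiM I (\<lambda>_. Q)) (\<lambda>z. g (z i) * g (z l)) = (if i = l then ?a else ?b)"
  proof -
    fix i l assume il: "i \<in> I" "l \<in> I"
    show "integrable (PiM I (\<lambda>_. Q)) (\<lambda>z. g (z i) * g (z l)) \<and>
      integral\<^sup>L (PiM I (\<lambda>_. Q)) (\<lambda>z. g (z i) * g (z l)) = (if i = l then ?a else ?b)"
    proof (cases "i = l")
      case True
      then show ?thesis using prod_int1[OF Q I(1) il(1) g2i] by simp
    next
      case False
      then show ?thesis using prod_int2[OF Q I(1) il False gi gi] by (simp add: power2_eq_square)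
    qed
  qed
  have sint: "integrable (PiM I (\<lambda>_. Q)) (\<lambda>z. \<Sum>i\<in>I. \<Sum>l\<in>I. g (z i) * g (z l))"
    using trm by (intro Bochner_Integration.integrable_sum) auto
  show "integrable (PiM I (\<lambda>_. Q)) (\<lambda>z. ((\<Sum>i\<in>I. h (z i)) / real (card I) - t)\<^sup>2)"
    unfolding eqz using sint by (intro integrable_divide) auto
  have "integral\<^sup>L (PiM I (\<lambda>_. Q)) (\<lambda>z. \<Sum>i\<in>I. \<Sum>l\<in>I. g (z i) * g (z l))
      = (\<Sum>i\<in>I. \<Sum>l\<in>I. integral\<^sup>L (PiM I (\<lambda>_. Q)) (\<lambda>z. g (z i) * g (z l)))"
    using trm by (simp add: Bochner_Integration.integral_sum Bochner_Integration.integrable_sum)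
  also have "\<dots> = (\<Sum>i\<in>I. \<Sum>l\<in>I. if i = l then ?a else ?b)"
    using trm by (intro sum.cong) auto
  also have "\<dots> = (\<Sum>i\<in>I. ?a + (?K - 1) * ?b)"
    using I by (intro sum.cong) (auto simp: sum_if_const)
  also have "\<dots> = ?K * (?a + (?K - 1) * ?b)" by simp
  finally have E: "integral\<^sup>L (PiM I (\<lambda>_. Q)) (\<lambda>z. \<Sum>i\<in>I. \<Sum>l\<in>I. g (z i) * g (z l)) = ?K * (?a + (?K - 1) * ?b)" .
  have ab: "?a - ?b \<le> B\<^sup>2"
  proof -
    have e1: "?a = integral\<^sup>L Q (\<lambda>x. h x * h x) - 2 * t * integral\<^sup>L Q h + t\<^sup>2"
      unfolding g_def using hi h2i by (simp add: algebra_simps power2_eq_square Q.prob_space)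
    have e2: "?b = (integral\<^sup>L Q h)\<^sup>2 - 2 * t * integral\<^sup>L Q h + t\<^sup>2"
      unfolding g_def using hi by (simp add: power2_diff algebra_simps Q.prob_space)
    have e3: "integral\<^sup>L Q (\<lambda>x. h x * h x) \<le> B * B"
    proof -
      have "integral\<^sup>L Q (\<lambda>x. h x * h x) \<le> integral\<^sup>L Q (\<lambda>x. B * B)"
      proof (rule integral_mono_AE)
        show "AE x in Q. h x * h x \<le> B * B" using hbb by eventually_elim (metis abs_le_D1)
      qed (use h2i in auto)
      then show ?thesis by (simp add: Q.prob_space)
    qed
    have e4: "0 \<le> integral\<^sup>L Q h * integral\<^sup>L Q h" by simp
    show ?thesis using e1 e2 e3 e4 unfolding power2_eq_square by linarith
  qed
  have bnn: "0 \<le> ?b" by simp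
  have "integral\<^sup>L (PiM I (\<lambda>_. Q)) (\<lambda>z. ((\<Sum>i\<in>I. h (z i)) / real (card I) - t)\<^sup>2)
      = ?K * (?a + (?K - 1) * ?b) / ?K\<^sup>2"
    unfolding eqz E[symmetric] by simp
  also have "\<dots> = (?a - ?b) / ?K + ?b" using K by (simp add: field_simps power2_eq_square)
  also have "\<dots> \<le> B\<^sup>2 / ?K + ?b" using ab K by (simp add: divide_right_mono)
  also have "?b = (integral\<^sup>L Q h - t)\<^sup>2" unfolding g_def using hi by (simp add: Q.prob_space)
  finally show "integral\<^sup>L (PiM I (\<lambda>_. Q)) (\<lambda>z. ((\<Sum>i\<in>I. h (z i)) / real (card I) - t)\<^sup>2)
       \<le> B\<^sup>2 / real (card I) + (integral\<^sup>L Q h - t)\<^sup>2" .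
qed


lemma divide_le_self:
  fixes a b :: real assumes "0 \<le> a" "1 \<le> b" shows "a / b \<le> a"
proof -
  have "a * 1 \<le> a * b" using assms by (intro mult_left_mono) auto
  then show ?thesis using assms by (simp add: divide_le_eq)
qed

lemma ptw:
  fixes q p I :: real
  assumes p: "0 \<le> p" and I: "1 \<le> I"
  shows "(max q 0 / I - p)\<^sup>2 \<le> 2 * (q - p)\<^sup>2 + 2 * ((I - 1)\<^sup>2 * p\<^sup>2)"
proof -
  let ?a = "(max q 0 - p) / I" and ?b = "p * (1 / I - 1)"
  have eq: "max q 0 / I - p = ?a + ?b" using I by (simp add: field_simps)
  have s: "(?a + ?b)\<^sup>2 \<le> 2 * ?a\<^sup>2 + 2 * ?b\<^sup>2"
    using sum_squares_bound[of ?a ?b] by (simp add: power2_sum)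
  have qp: "(max q 0 - p)\<^sup>2 \<le> (q - p)\<^sup>2"
  proof (cases "q \<ge> 0")
    case True then show ?thesis by simp
  next
    case False
    then have "p \<le> p - q" by simp
    then have "p\<^sup>2 \<le> (p - q)\<^sup>2" using p by (intro power_mono) auto
    then show ?thesis using False by (simp add: power2_commute)
  qed
  have a: "?a\<^sup>2 \<le> (q - p)\<^sup>2"
  proof -
    have "?a\<^sup>2 = (max q 0 - p)\<^sup>2 / I\<^sup>2" by (simp add: power_divide)
    also have "\<dots> \<le> (max q 0 - p)\<^sup>2" using I
      by (intro divide_le_self) (auto simp: one_le_power)
    finally show ?thesis using qp by linarith
  qed
  have b: "?b\<^sup>2 \<le> (I - 1)\<^sup>2 * p\<^sup>2"
  proof -
    have "0 \<le> 1 - 1 / I" using I by simp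
    moreover have "1 - 1 / I \<le> I - 1"
    proof -
      have "1 - 1 / I = (I - 1) / I" using I by (simp add: field_simps)
      also have "\<dots> \<le> I - 1" using I by (intro divide_le_self) auto
      finally show ?thesis .
    qed
    ultimately have "(1 - 1 / I)\<^sup>2 \<le> (I - 1)\<^sup>2" by (intro power_mono) auto
    then have "p\<^sup>2 * (1 - 1 / I)\<^sup>2 \<le> p\<^sup>2 * (I - 1)\<^sup>2" by (intro mult_left_mono) auto
    then show ?thesis by (simp add: power_mult_distrib power2_commute[of 1] mult.commute)
  qed
  show ?thesis unfolding eq using s a b by linarith
qed

context sob begin

lemma corr_bound:
  fixes q :: "real \<Rightarrow> real"
  assumes qm: "q \<in> borel_measurable N01" and qL2: "integrable N01 (\<lambda>x. (q x)\<^sup>2)"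
    and q1: "integral\<^sup>L N01 q = 1"
  defines "I \<equiv> integral\<^sup>L N01 (\<lambda>x. max (q x) 0)"
  shows "1 \<le> I"
    "integrable N01 (\<lambda>x. (max (q x) 0 / I - p x)\<^sup>2)"
    "integral\<^sup>L N01 (\<lambda>x. (max (q x) 0 / I - p x)\<^sup>2) \<le> 2 * (2 + C\<^sup>2) * integral\<^sup>L N01 (\<lambda>x. (q x - p x)\<^sup>2)"
proof -
  have qi: "integrable N01 q" by (rule L2_L1[OF qm qL2])
  have qmi: "integrable N01 (\<lambda>x. max (- q x) 0)" using qi by auto
  have qpi: "integrable N01 (\<lambda>x. max (q x) 0)" using qi by auto
  have qpq: "\<And>x. max (q x) 0 = q x + max (- q x) 0" by auto
  have Ieq: "I = 1 + integral\<^sup>L N01 (\<lambda>x. max (- q x) 0)"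
    unfolding I_def qpq using qi qmi q1 by simp
  have qm0: "0 \<le> integral\<^sup>L N01 (\<lambda>x. max (- q x) 0)" by (intro integral_nonneg_AE) auto
  then show I1: "1 \<le> I" using Ieq by simp
  have dm: "(\<lambda>x. q x - p x) \<in> borel_measurable N01" using qm pN by auto
  have dL2: "integrable N01 (\<lambda>x. (q x - p x)\<^sup>2)" by (rule L2_diff[OF qm qL2 pN p_L2])
  have adm: "(\<lambda>x. \<bar>q x - p x\<bar>) \<in> borel_measurable N01" using dm by auto
  have adL2: "integrable N01 (\<lambda>x. (\<bar>q x - p x\<bar>)\<^sup>2)" using dL2 by simp
  have "integral\<^sup>L N01 (\<lambda>x. max (- q x) 0) \<le> integral\<^sup>L N01 (\<lambda>x. \<bar>q x - p x\<bar>)"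
  proof (rule integral_mono_AE)
    show "integrable N01 (\<lambda>x. \<bar>q x - p x\<bar>)" using L2_L1[OF adm adL2] .
    show "AE x in N01. max (- q x) 0 \<le> \<bar>q x - p x\<bar>"
    proof (rule AE_I2)
      fix x assume "x \<in> space N01"
      then have "0 \<le> p x" using p_nonneg by auto
      then show "max (- q x) 0 \<le> \<bar>q x - p x\<bar>" by auto
    qed
  qed (use qmi in auto)
  moreover have "(integral\<^sup>L N01 (\<lambda>x. \<bar>q x - p x\<bar>))\<^sup>2 \<le> integral\<^sup>L N01 (\<lambda>x. (q x - p x)\<^sup>2)"
    using jensen_N01[OF adm adL2] by simp
  ultimately have I2: "(I - 1)\<^sup>2 \<le> integral\<^sup>L N01 (\<lambda>x. (q x - p x)\<^sup>2)"
    using Ieq qm0 by (smt (verit, ccfv_SIG) power_mono)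
  have qpm: "(\<lambda>x. max (q x) 0 / I) \<in> borel_measurable N01" using qm by auto
  have qpL2: "integrable N01 (\<lambda>x. (max (q x) 0 / I)\<^sup>2)"
  proof (rule Bochner_Integration.integrable_bound[OF qL2])
    show "AE x in N01. norm ((max (q x) 0 / I)\<^sup>2) \<le> norm ((q x)\<^sup>2)"
    proof (rule AE_I2)
      fix x
      have "(max (q x) 0 / I)\<^sup>2 \<le> (max (q x) 0)\<^sup>2" using I1
        by (simp add: power_divide) (intro divide_le_self, auto simp: one_le_power)
      also have "\<dots> \<le> (q x)\<^sup>2" by (cases "q x \<ge> 0") auto
      finally show "norm ((max (q x) 0 / I)\<^sup>2) \<le> norm ((q x)\<^sup>2)" by simp
    qed
  qed (use qpm in auto)
  show fi: "integrable N01 (\<lambda>x. (max (q x) 0 / I - p x)\<^sup>2)" by (rule L2_diff[OF qpm qpL2 pN p_L2])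
  have "integral\<^sup>L N01 (\<lambda>x. (max (q x) 0 / I - p x)\<^sup>2)
     \<le> integral\<^sup>L N01 (\<lambda>x. 2 * (q x - p x)\<^sup>2 + 2 * ((I - 1)\<^sup>2 * (p x)\<^sup>2))"
  proof (rule integral_mono_AE[OF fi])
    show "integrable N01 (\<lambda>x. 2 * (q x - p x)\<^sup>2 + 2 * ((I - 1)\<^sup>2 * (p x)\<^sup>2))"
      using dL2 p_L2 by auto
    show "AE x in N01. (max (q x) 0 / I - p x)\<^sup>2 \<le> 2 * (q x - p x)\<^sup>2 + 2 * ((I - 1)\<^sup>2 * (p x)\<^sup>2)"
    proof (rule AE_I2)
      fix x assume "x \<in> space N01"
      then have "0 \<le> p x" using p_nonneg by auto
      then show "(max (q x) 0 / I - p x)\<^sup>2 \<le> 2 * (q x - p x)\<^sup>2 + 2 * ((I - 1)\<^sup>2 * (p x)\<^sup>2)"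
        using ptw I1 by auto
    qed
  qed
  also have "\<dots> = 2 * integral\<^sup>L N01 (\<lambda>x. (q x - p x)\<^sup>2) + 2 * ((I - 1)\<^sup>2 * integral\<^sup>L N01 (\<lambda>x. (p x)\<^sup>2))"
    using dL2 p_L2 by simp
  also have "\<dots> \<le> 2 * integral\<^sup>L N01 (\<lambda>x. (q x - p x)\<^sup>2) + 2 * (integral\<^sup>L N01 (\<lambda>x. (q x - p x)\<^sup>2) * (1 + C\<^sup>2))"
    using I2 p_norm by (intro add_left_mono mult_left_mono mult_mono) auto
  also have "\<dots> = 2 * (2 + C\<^sup>2) * integral\<^sup>L N01 (\<lambda>x. (q x - p x)\<^sup>2)" by (simp add: algebra_simps)
  finally show "integral\<^sup>L N01 (\<lambda>x. (max (q x) 0 / I - p x)\<^sup>2) \<le> 2 * (2 + C\<^sup>2) * integral\<^sup>L N01 (\<lambda>x. (q x - p x)\<^sup>2)" .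
qed

end

lemma sets_dens01[simp, measurable_cong]: "sets (dens01 f) = sets borel"
  by (simp add: dens01_def)

lemma space_dens01[simp]: "space (dens01 f) = UNIV"
  by (simp add: dens01_def)

lemma meas_dens01_iff: "g \<in> borel_measurable (dens01 f) \<longleftrightarrow> g \<in> borel_measurable borel"
  by (subst measurable_cong_sets[OF sets_dens01[of f] refl]) (rule refl)

lemma dens01_facts:
  fixes f :: "real \<Rightarrow> real"
  assumes fm: "f \<in> borel_measurable borel" and f0: "\<And>x. x \<in> {0..1} \<Longrightarrow> 0 \<le> f x"
    and fi: "integrable N01 f" and f1: "integral\<^sup>L N01 f = 1"
  shows "prob_space (dens01 f)"
    "AE x in dens01 f. x \<in> {0..1}"
    "\<And>h. h \<in> borel_measurable borel \<Longrightarrow> integral\<^sup>L (dens01 f) h = integral\<^sup>L N01 (\<lambda>x. f x * h x)"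
proof -
  let ?g = "\<lambda>x. indicator {0..1} x * f x :: real"
  have gm: "?g \<in> borel_measurable borel" using fm by measurable
  have g0: "\<And>x. 0 \<le> ?g x" using f0 by (auto simp: indicator_def)
  have gi: "integrable lborel ?g"
    using fi unfolding set_integrable_N01[symmetric] set_integrable_def by simp
  have "emeasure (dens01 f) (space (dens01 f)) = \<integral>\<^sup>+ x. ennreal (?g x) \<partial>lborel"
    unfolding dens01_def by (subst emeasure_density) (use gm in auto)
  also have "\<dots> = ennreal (integral\<^sup>L lborel ?g)"
    using gi g0 by (intro nn_integral_eq_integral) auto
  also have "integral\<^sup>L lborel ?g = 1"
    using f1 unfolding set_integral_N01[symmetric] set_lebesgue_integral_def by simp
  finally show "prob_space (dens01 f)" by (intro prob_spaceI) simp
  show "AE x in dens01 f. x \<in> {0..1}"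
    unfolding dens01_def using gm
    by (subst AE_density) (auto simp: indicator_def)
  fix h :: "real \<Rightarrow> real" assume hm: "h \<in> borel_measurable borel"
  have "integral\<^sup>L (dens01 f) h = integral\<^sup>L lborel (\<lambda>x. ?g x *\<^sub>R h x)"
    unfolding dens01_def using hm gm g0 by (intro integral_density) auto
  also have "\<dots> = (\<integral>x\<in>{0..1}. f x * h x \<partial>lborel)"
    unfolding set_lebesgue_integral_def by (simp add: mult.assoc)
  also have "\<dots> = integral\<^sup>L N01 (\<lambda>x. f x * h x)" by (rule set_integral_N01)
  finally show "integral\<^sup>L (dens01 f) h = integral\<^sup>L N01 (\<lambda>x. f x * h x)" .
qed

lemma reflect_nn:
  fixes F :: "real \<Rightarrow> ennreal"
  assumes "F \<in> borel_measurable borel"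
  shows "(\<integral>\<^sup>+ x. F (- x) \<partial>lborel) = (\<integral>\<^sup>+ x. F x \<partial>lborel)"
proof -
  have "(\<integral>\<^sup>+ x. F x \<partial>lborel) = (\<integral>\<^sup>+ x. F x \<partial>distr lborel borel uminus)"
    by (simp add: lborel_distr_uminus)
  also have "\<dots> = (\<integral>\<^sup>+ x. F (- x) \<partial>lborel)"
    using assms by (subst nn_integral_distr) auto
  finally show ?thesis by simp
qed

lemma lap_even:
  fixes h :: "real \<Rightarrow> real" and l :: real
  assumes l: "0 < l" and hm: "h \<in> borel_measurable borel" and h0: "\<And>x. 0 \<le> h x"
    and he: "\<And>x. h (- x) = h x"
  shows "(\<integral>\<^sup>+ v. ennreal (l / 2 * exp (- (l * \<bar>v\<bar>)) * h v) \<partial>lborel)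
       = (\<integral>\<^sup>+ v. ennreal (erlang_density 0 l v * h v) \<partial>lborel)"
proof -
  let ?e = "erlang_density 0 l"
  have ae: "AE v in lborel. ennreal (l / 2 * exp (- (l * \<bar>v\<bar>)) * h v)
      = ennreal (1/2) * ennreal (?e v * h v) + ennreal (1/2) * ennreal (?e (- v) * h (- v))"
    using AE_lborel_singleton[of 0]
  proof eventually_elim
    case (elim v)
    have e0: "0 \<le> ?e v * h v" "0 \<le> ?e (- v) * h (- v)" using l h0 by auto
    have "l / 2 * exp (- (l * \<bar>v\<bar>)) * h v = 1/2 * (?e v * h v) + 1/2 * (?e (- v) * h (- v))"
      using elim l he[of v] by (cases "v < 0") (auto simp: erlang_density_def)
    then have "ennreal (l / 2 * exp (- (l * \<bar>v\<bar>)) * h v) = ennreal (1/2 * (?e v * h v)) + ennreal (1/2 * (?e (- v) * h (- v)))"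
      using e0 by (simp only:) (rule ennreal_plus, auto)
    also have "\<dots> = ennreal (1/2) * ennreal (?e v * h v) + ennreal (1/2) * ennreal (?e (- v) * h (- v))"
      using e0 by (subst (1 2) ennreal_mult) auto
    finally show ?case .
  qed
  have "(\<integral>\<^sup>+ v. ennreal (l / 2 * exp (- (l * \<bar>v\<bar>)) * h v) \<partial>lborel)
     = (\<integral>\<^sup>+ v. ennreal (1/2) * ennreal (?e v * h v) + ennreal (1/2) * ennreal (?e (- v) * h (- v)) \<partial>lborel)"
    by (rule nn_integral_cong_AE[OF ae])
  also have "\<dots> = ennreal (1/2) * (\<integral>\<^sup>+ v. ennreal (?e v * h v) \<partial>lborel)
       + ennreal (1/2) * (\<integral>\<^sup>+ v. ennreal (?e (- v) * h (- v)) \<partial>lborel)"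
    using hm by (simp add: nn_integral_add nn_integral_cmult)
  also have "(\<integral>\<^sup>+ v. ennreal (?e (- v) * h (- v)) \<partial>lborel) = (\<integral>\<^sup>+ v. ennreal (?e v * h v) \<partial>lborel)"
    using reflect_nn[of "\<lambda>v. ennreal (?e v * h v)"] hm by simp
  also have "ennreal (1/2) * (\<integral>\<^sup>+ v. ennreal (?e v * h v) \<partial>lborel)
       + ennreal (1/2) * (\<integral>\<^sup>+ v. ennreal (?e v * h v) \<partial>lborel) = (\<integral>\<^sup>+ v. ennreal (?e v * h v) \<partial>lborel)"
  proof -
    have "ennreal (1/2) + ennreal (1/2) = ennreal (1/2 + 1/2)" by (rule ennreal_plus[symmetric]) auto
    then have h: "ennreal (1/2) + ennreal (1/2) = 1" by simp
    show ?thesis unfolding distrib_right[symmetric] h by simp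
  qed
  finally show ?thesis .
qed

lemma lap_facts:
  fixes l :: real
  assumes l: "0 < l"
  defines "L \<equiv> density lborel (\<lambda>v. ennreal (l / 2 * exp (- (l * \<bar>v\<bar>))))"
  shows "prob_space L" "(\<integral>\<^sup>+ v. ennreal (v\<^sup>2) \<partial>L) = ennreal (2 / l\<^sup>2)"
proof -
  have dm: "(\<lambda>v. ennreal (l / 2 * exp (- (l * \<bar>v\<bar>)))) \<in> borel_measurable borel" by measurable
  have "emeasure L (space L) = (\<integral>\<^sup>+ v. ennreal (l / 2 * exp (- (l * \<bar>v\<bar>)) * 1) \<partial>lborel)"
    unfolding L_def by (subst emeasure_density) (use dm in auto)
  also have "\<dots> = (\<integral>\<^sup>+ v. ennreal (erlang_density 0 l v * 1) \<partial>lborel)"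
    by (rule lap_even[OF l]) auto
  also have "\<dots> = 1"
    using nn_integral_erlang_ith_moment[OF l, of 0 0] by simp
  finally show "prob_space L" by (intro prob_spaceI)
  have "(\<integral>\<^sup>+ v. ennreal (v\<^sup>2) \<partial>L) = (\<integral>\<^sup>+ v. ennreal (l / 2 * exp (- (l * \<bar>v\<bar>))) * ennreal (v\<^sup>2) \<partial>lborel)"
    unfolding L_def using dm by (simp add: nn_integral_density)
  also have "\<dots> = (\<integral>\<^sup>+ v. ennreal (l / 2 * exp (- (l * \<bar>v\<bar>)) * v\<^sup>2) \<partial>lborel)"
    by (intro nn_integral_cong ennreal_mult[symmetric]) (use l in auto)
  also have "\<dots> = (\<integral>\<^sup>+ v. ennreal (erlang_density 0 l v * v ^ 2) \<partial>lborel)"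
    by (rule lap_even[OF l]) auto
  also have "\<dots> = ennreal (2 / l\<^sup>2)"
    using nn_integral_erlang_ith_moment[OF l, of 0 2] by simp
  finally show "(\<integral>\<^sup>+ v. ennreal (v\<^sup>2) \<partial>L) = ennreal (2 / l\<^sup>2)" .
qed


lemma qcorr_eq:
  fixes q :: "real \<Rightarrow> real"
  assumes q1: "integral\<^sup>L N01 q = 1"
  shows "dens01 (qcorr q) = dens01 (\<lambda>y. max (q y) 0 / integral\<^sup>L N01 (\<lambda>y. max (q y) 0))"
proof -
  have pw: "\<And>s. q s * indicator {s. q s > 0} s = max (q s) 0" by (auto simp: indicator_def)
  have "\<And>y. indicator {0..1} y * qcorr q y = indicator {0..1} y * (max (q y) 0 / integral\<^sup>L N01 (\<lambda>y. max (q y) 0))"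
  proof -
    fix y
    show "indicator {0..1} y * qcorr q y = indicator {0..1} y * (max (q y) 0 / integral\<^sup>L N01 (\<lambda>y. max (q y) 0))"
    proof (cases "\<exists>y\<in>{0..1}. q y < 0")
      case True
      then show ?thesis unfolding qcorr_def set_integral_N01 pw by simp
    next
      case False
      have "integral\<^sup>L N01 (\<lambda>y. max (q y) 0) = integral\<^sup>L N01 q"
        using False by (intro Bochner_Integration.integral_cong) (auto simp: not_less)
      then show ?thesis using False q1 unfolding qcorr_def by (auto simp: indicator_def not_less)
    qed
  qed
  then show ?thesis unfolding dens01_def by simp
qed

context sob begin

lemma S_meas_borel:
  "(\<lambda>x. \<Sum>j\<in>{1..m}. c j * \<psi> j x) \<in> borel_measurable borel"
  by (intro borel_measurable_sum borel_measurable_times borel_measurable_const psi_meas) auto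

lemma qlin_facts:
  fixes d :: "nat \<Rightarrow> real" and m :: nat
  defines "q \<equiv> \<lambda>y. 1 + (\<Sum>j=1..m. d j * \<psi> j y)"
  shows "q \<in> borel_measurable borel" "integrable N01 (\<lambda>y. (q y)\<^sup>2)" "integral\<^sup>L N01 q = 1"
    "integral\<^sup>L N01 (\<lambda>y. (q y - p y)\<^sup>2) = T m + (\<Sum>j=1..m. (d j - \<beta> j)\<^sup>2)"
proof -
  show qm: "q \<in> borel_measurable borel" unfolding q_def using S_meas_borel by measurable
  have J: "finite {1..m}" "\<forall>j\<in>{1..m}. j \<ge> 1" by auto
  show "integrable N01 (\<lambda>y. (q y)\<^sup>2)" unfolding q_def
    by (rule L2_add) (use S_meas[OF J(2)] S_L2[OF J] in auto)
  have Si: "integrable N01 (\<lambda>y. \<Sum>j=1..m. d j * \<psi> j y)" using psi_int by auto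
  have "integral\<^sup>L N01 q = integral\<^sup>L N01 (\<lambda>_. 1) + integral\<^sup>L N01 (\<lambda>y. \<Sum>j=1..m. d j * \<psi> j y)"
    unfolding q_def by (rule Bochner_Integration.integral_add) (use Si in auto)
  also have "integral\<^sup>L N01 (\<lambda>y. \<Sum>j=1..m. d j * \<psi> j y) = (\<Sum>j=1..m. d j * integral\<^sup>L N01 (\<psi> j))"
    using psi_int by (subst Bochner_Integration.integral_sum) auto
  finally have "integral\<^sup>L N01 q = 1 + (\<Sum>j=1..m. d j * integral\<^sup>L N01 (\<psi> j))"
    by (simp add: N01.prob_space)
  then show "integral\<^sup>L N01 q = 1" by (simp add: psi_mean)
  have "\<And>y. (q y - p y)\<^sup>2 = (p y - 1 - (\<Sum>j=1..m. d j * \<psi> j y))\<^sup>2"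
    unfolding q_def by (simp add: diff_diff_eq power2_commute)
  then have "integral\<^sup>L N01 (\<lambda>y. (q y - p y)\<^sup>2) = integral\<^sup>L N01 (\<lambda>y. (p y - 1 - (\<Sum>j=1..m. d j * \<psi> j y))\<^sup>2)"
    by simp
  also have "\<dots> = T m + (\<Sum>j=1..m. (d j - \<beta> j)\<^sup>2)" by (rule err_formula)
  finally show "integral\<^sup>L N01 (\<lambda>y. (q y - p y)\<^sup>2) = T m + (\<Sum>j=1..m. (d j - \<beta> j)\<^sup>2)" .
qed

lemma Zlevel:
  fixes f :: "real \<Rightarrow> real" and k m :: nat
  assumes fm: "f \<in> borel_measurable borel" and f0: "\<And>x. x \<in> {0..1} \<Longrightarrow> 0 \<le> f x"
    and fL2: "integrable N01 (\<lambda>x. (f x)\<^sup>2)" and f1: "integral\<^sup>L N01 f = 1" and k: "k \<ge> 1"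
  shows "(\<integral>\<^sup>+ Z. ennreal (T m + (\<Sum>j=1..m. ((\<Sum>i\<in>{1..k}. \<psi> j (Z i)) / real k - \<beta> j)\<^sup>2))
           \<partial>PiM {1..k} (\<lambda>_. dens01 f))
         \<le> ennreal (T m + real m * c0\<^sup>2 / real k + integral\<^sup>L N01 (\<lambda>x. (f x - p x)\<^sup>2))"
proof -
  have fN: "f \<in> borel_measurable N01" using meas_N01[OF fm] .
  have fi: "integrable N01 f" by (rule L2_L1[OF fN fL2])
  note D = dens01_facts[OF fm f0 fi f1]
  let ?Q = "dens01 f" and ?P = "PiM {1..k} (\<lambda>_. dens01 f)"
  have ck: "card {1..k} = k" by simp
  have Kne: "{1..k} \<noteq> {}" using k by auto
  have hm: "\<And>j. j \<ge> 1 \<Longrightarrow> \<psi> j \<in> borel_measurable ?Q" using psi_meas meas_dens01_iff by blast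
  have hb: "\<And>j. j \<ge> 1 \<Longrightarrow> AE x in ?Q. \<bar>\<psi> j x\<bar> \<le> c0"
  proof -
    fix j :: nat assume j: "j \<ge> 1"
    show "AE x in ?Q. \<bar>\<psi> j x\<bar> \<le> c0"
    proof (rule AE_mp[OF D(2)])
      show "AE x in ?Q. x \<in> {0..1} \<longrightarrow> \<bar>\<psi> j x\<bar> \<le> c0"
        by (intro AE_I2 impI psi_bnd[OF j])
    qed
  qed
  note V = var_bound[OF D(1) hm hb _ Kne, unfolded ck]
  let ?b = "\<lambda>j. integral\<^sup>L ?Q (\<psi> j)"
  have beq: "\<And>j. j \<ge> 1 \<Longrightarrow> ?b j = integral\<^sup>L N01 (\<lambda>x. f x * \<psi> j x)"
    using D(3) psi_meas by blast
  let ?a = "\<lambda>j Z. ((\<Sum>i\<in>{1..k}. \<psi> j (Z i)) / real k - \<beta> j)\<^sup>2"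
  have ints: "\<And>j. j \<in> {1..m} \<Longrightarrow> integrable ?P (?a j)" using V(1) by auto
  have eqn: "(\<integral>\<^sup>+ Z. ennreal (T m + (\<Sum>j=1..m. ?a j Z)) \<partial>?P) = ennreal (integral\<^sup>L ?P (\<lambda>Z. T m + (\<Sum>j=1..m. ?a j Z)))"
  proof (rule nn_integral_eq_integral)
    interpret P: prob_space ?P by (intro prob_space_PiM D(1))
    show "integrable ?P (\<lambda>Z. T m + (\<Sum>j=1..m. ?a j Z))"
      by (intro Bochner_Integration.integrable_add P.integrable_const Bochner_Integration.integrable_sum ints)
    show "AE x in ?P. 0 \<le> T m + (\<Sum>j=1..m. ?a j x)" using T_nonneg[of m] by (intro AE_I2 add_nonneg_nonneg sum_nonneg) auto
  qed
  have "integral\<^sup>L ?P (\<lambda>Z. T m + (\<Sum>j=1..m. ?a j Z)) = T m + (\<Sum>j=1..m. integral\<^sup>L ?P (?a j))"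
  proof -
    interpret P: prob_space ?P by (intro prob_space_PiM D(1))
    have i2: "integrable ?P (\<lambda>Z. \<Sum>j=1..m. ?a j Z)" by (intro Bochner_Integration.integrable_sum ints)
    have e1: "integral\<^sup>L ?P (\<lambda>Z. T m + (\<Sum>j=1..m. ?a j Z)) = integral\<^sup>L ?P (\<lambda>_. T m) + integral\<^sup>L ?P (\<lambda>Z. \<Sum>j=1..m. ?a j Z)"
      by (rule Bochner_Integration.integral_add[OF P.integrable_const i2])
    have e2: "integral\<^sup>L ?P (\<lambda>Z. \<Sum>j=1..m. ?a j Z) = (\<Sum>j=1..m. integral\<^sup>L ?P (?a j))"
      by (rule Bochner_Integration.integral_sum) (rule ints)
    have e3: "integral\<^sup>L ?P (\<lambda>_. T m) = T m" using P.prob_space by simp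
    show ?thesis unfolding e1 e2 e3 ..
  qed
  also have "\<dots> \<le> T m + (\<Sum>j=1..m. c0\<^sup>2 / real k + (?b j - \<beta> j)\<^sup>2)"
    using V(2) by (intro add_left_mono sum_mono) auto
  also have "\<dots> = T m + real m * c0\<^sup>2 / real k + (\<Sum>j=1..m. (integral\<^sup>L N01 (\<lambda>x. (f x - p x) * \<psi> j x))\<^sup>2)"
  proof -
    have "\<And>j. j \<in> {1..m} \<Longrightarrow> ?b j - \<beta> j = integral\<^sup>L N01 (\<lambda>x. (f x - p x) * \<psi> j x)"
    proof -
      fix j assume j: "j \<in> {1..m}"
      have "integral\<^sup>L N01 (\<lambda>x. (f x - p x) * \<psi> j x) = integral\<^sup>L N01 (\<lambda>x. f x * \<psi> j x - p x * \<psi> j x)"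
        by (simp add: algebra_simps)
      also have "\<dots> = integral\<^sup>L N01 (\<lambda>x. f x * \<psi> j x) - integral\<^sup>L N01 (\<lambda>x. p x * \<psi> j x)"
        using psi_mult_int[OF fN fL2] p_psi_int j by simp
      finally show "?b j - \<beta> j = integral\<^sup>L N01 (\<lambda>x. (f x - p x) * \<psi> j x)"
        using beq beta_eq j by simp
    qed
    then show ?thesis by (simp add: sum.distrib)
  qed
  also have "\<dots> \<le> T m + real m * c0\<^sup>2 / real k + integral\<^sup>L N01 (\<lambda>x. (f x - p x)\<^sup>2)"
    using bessel[of "\<lambda>x. f x - p x" "{1..m}"] L2_diff[OF fN fL2 pN p_L2] fN pN by auto
  finally show ?thesis unfolding eqn by (rule ennreal_leI)
qed

end

context onb begin

definition psi' :: "nat \<Rightarrow> real \<Rightarrow> real" where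
  "psi' j = (if j = 0 then (\<lambda>_. 0) else \<psi> j)"

lemma psi'_meas[measurable]: "psi' j \<in> borel_measurable borel"
  unfolding psi'_def using psi_meas by auto

lemma qhat_psi': "qhat \<psi> m n X \<nu> = qhat psi' m n X \<nu>"
  unfolding qhat_def psi'_def by (intro ext arg_cong2[where f="(+)"] refl sum.cong) auto

lemma qhat_meas:
  "(\<lambda>w. qhat psi' m n (fst (fst w)) (snd (fst w)) (snd w))
     \<in> borel_measurable ((PiM {1..n} (\<lambda>_. borel) \<Otimes>\<^sub>M PiM {1..m} (\<lambda>_. borel)) \<Otimes>\<^sub>M borel)"
  unfolding qhat_def by measurable

lemma qhat_measN:
  "(\<lambda>w. max (qhat psi' m n (fst (fst w)) (snd (fst w)) (snd w)) 0)
     \<in> borel_measurable ((PiM {1..n} (\<lambda>_. borel) \<Otimes>\<^sub>M PiM {1..m} (\<lambda>_. borel)) \<Otimes>\<^sub>M N01)"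
proof -
  let ?A = "PiM {1..n} (\<lambda>_. borel) \<Otimes>\<^sub>M PiM {1..m} (\<lambda>_. borel :: real measure)"
  have i: "(\<lambda>x. x) \<in> measurable N01 (borel :: real measure)"
    using meas_N01[of "\<lambda>x. x"] by simp
  have "(\<lambda>w. (fst w, snd w)) \<in> measurable (?A \<Otimes>\<^sub>M N01) (?A \<Otimes>\<^sub>M borel)"
    by (intro measurable_Pair measurable_fst measurable_compose[OF measurable_snd i])
  then have "(\<lambda>w. w) \<in> measurable (?A \<Otimes>\<^sub>M N01) (?A \<Otimes>\<^sub>M borel)" by simp
  from measurable_compose[OF this qhat_meas]
  show ?thesis by measurable
qed

lemma Iq_meas:
  "(\<lambda>\<theta>. integral\<^sup>L N01 (\<lambda>y. max (qhat psi' m n (fst \<theta>) (snd \<theta>) y) 0))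
     \<in> borel_measurable (PiM {1..n} (\<lambda>_. borel) \<Otimes>\<^sub>M PiM {1..m} (\<lambda>_. borel))"
  using qhat_measN by (intro N01.borel_measurable_lebesgue_integral) (simp add: split_beta')

definition qc :: "nat \<Rightarrow> nat \<Rightarrow> (nat \<Rightarrow> real) \<Rightarrow> (nat \<Rightarrow> real) \<Rightarrow> real \<Rightarrow> real" where
  "qc m n X \<nu> y = max (qhat \<psi> m n X \<nu> y) 0 / integral\<^sup>L N01 (\<lambda>y. max (qhat \<psi> m n X \<nu> y) 0)"

lemma qc_meas:
  "(\<lambda>w. qc m n (fst (fst w)) (snd (fst w)) (snd w))
     \<in> borel_measurable ((PiM {1..n} (\<lambda>_. borel) \<Otimes>\<^sub>M PiM {1..m} (\<lambda>_. borel)) \<Otimes>\<^sub>M borel)"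
proof -
  have a: "(\<lambda>w. integral\<^sup>L N01 (\<lambda>y. max (qhat psi' m n (fst (fst w)) (snd (fst w)) y) 0))
     \<in> borel_measurable ((PiM {1..n} (\<lambda>_. borel) \<Otimes>\<^sub>M PiM {1..m} (\<lambda>_. borel)) \<Otimes>\<^sub>M borel)"
    using measurable_compose[OF measurable_fst Iq_meas] by simp
  show ?thesis unfolding qc_def qhat_psi'
    by (intro borel_measurable_divide borel_measurable_max qhat_meas a borel_measurable_const)
qed

lemma qc_meas1: "qc m n X \<nu> \<in> borel_measurable borel"
proof -
  have "qhat \<psi> m n X \<nu> \<in> borel_measurable borel" by (subst qhat_psi') (unfold qhat_def, measurable)
  then show ?thesis unfolding qc_def by measurable
qed

lemma Kmeas:
  fixes k m n :: nat
  defines "A \<equiv> PiM {1..n} (\<lambda>_. borel) \<Otimes>\<^sub>M PiM {1..m} (\<lambda>_. borel :: real measure)"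
  assumes P: "\<And>X \<nu>. prob_space (dens01 (qc m n X \<nu>))"
  shows "(\<lambda>\<theta>. PiM {1..k} (\<lambda>_. dens01 (qc m n (fst \<theta>) (snd \<theta>))))
     \<in> measurable A (subprob_algebra (PiM {1..k} (\<lambda>_. borel :: real measure)))"
proof (rule measurable_subprob_algebra_generated[where \<Omega>="space (PiM {1..k} (\<lambda>_. borel :: real measure))"
      and G="prod_algebra {1..k} (\<lambda>_. borel :: real measure)"])
  show "sets (PiM {1..k} (\<lambda>_. borel :: real measure)) = sigma_sets (space (PiM {1..k} (\<lambda>_. borel :: real measure))) (prod_algebra {1..k} (\<lambda>_. borel))"
    by (simp add: sets_PiM space_PiM)
  show "Int_stable (prod_algebra {1..k} (\<lambda>_. borel :: real measure))" by (rule Int_stable_prod_algebra)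
  show "prod_algebra {1..k} (\<lambda>_. borel :: real measure) \<subseteq> Pow (space (PiM {1..k} (\<lambda>_. borel :: real measure)))"
    unfolding space_PiM by (rule prod_algebra_sets_into_space)
  fix a
  show "subprob_space (PiM {1..k} (\<lambda>_. dens01 (qc m n (fst a) (snd a))))"
    by (intro prob_space_imp_subprob_space prob_space_PiM P)
  show "sets (PiM {1..k} (\<lambda>_. dens01 (qc m n (fst a) (snd a)))) = sets (PiM {1..k} (\<lambda>_. borel :: real measure))"
    by (intro sets_PiM_cong) auto
next
  have jm: "\<And>B. B \<in> sets borel \<Longrightarrow> (\<lambda>\<theta>. emeasure (dens01 (qc m n (fst \<theta>) (snd \<theta>))) B) \<in> borel_measurable A"
  proof -
    fix B :: "real set" assume B: "B \<in> sets borel"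
    have e: "\<And>\<theta>. emeasure (dens01 (qc m n (fst \<theta>) (snd \<theta>))) B
       = (\<integral>\<^sup>+ y. ennreal (indicator {0..1} y * qc m n (fst \<theta>) (snd \<theta>) y) * indicator B y \<partial>lborel)"
    proof -
      fix \<theta> :: "(nat \<Rightarrow> real) \<times> (nat \<Rightarrow> real)"
      have "(\<lambda>y. qc m n (fst \<theta>) (snd \<theta>) y) \<in> borel_measurable borel"
        by (rule qc_meas1)
      then show "emeasure (dens01 (qc m n (fst \<theta>) (snd \<theta>))) B
       = (\<integral>\<^sup>+ y. ennreal (indicator {0..1} y * qc m n (fst \<theta>) (snd \<theta>) y) * indicator B y \<partial>lborel)"
        unfolding dens01_def using B by (subst emeasure_density) auto
    qed
    have j: "(\<lambda>w. ennreal (indicator {0..1} (snd w) * qc m n (fst (fst w)) (snd (fst w)) (snd w)) * indicator B (snd w))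
        \<in> borel_measurable (A \<Otimes>\<^sub>M lborel)"
    proof -
      have "(\<lambda>w. ennreal (indicator {0..1} (snd w) * qc m n (fst (fst w)) (snd (fst w)) (snd w)) * indicator B (snd w))
        \<in> borel_measurable (A \<Otimes>\<^sub>M borel)"
        unfolding A_def using qc_meas B by measurable
      then show ?thesis
        by (subst measurable_cong_sets[OF sets_pair_measure_cong[OF refl sets_lborel] refl])
    qed
    show "(\<lambda>\<theta>. emeasure (dens01 (qc m n (fst \<theta>) (snd \<theta>))) B) \<in> borel_measurable A"
      unfolding e using lborel.borel_measurable_nn_integral[of "\<lambda>\<theta> y. ennreal (indicator {0..1} y * qc m n (fst \<theta>) (snd \<theta>) y) * indicator B y" A] j
      by (simp add: split_beta')
  qed
  fix X assume "X \<in> prod_algebra {1..k} (\<lambda>_. borel :: real measure)"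
  then obtain E where XE: "X = PiE {1..k} E" and E: "\<And>i. i \<in> {1..k} \<Longrightarrow> E i \<in> sets borel"
    unfolding prod_algebra_eq_finite[OF finite_atLeastAtMost] by (force simp: Pi_iff)
  have "\<And>\<theta>. emeasure (PiM {1..k} (\<lambda>_. dens01 (qc m n (fst \<theta>) (snd \<theta>)))) X
      = (\<Prod>i\<in>{1..k}. emeasure (dens01 (qc m n (fst \<theta>) (snd \<theta>))) (E i))"
  proof -
    fix \<theta> :: "(nat \<Rightarrow> real) \<times> (nat \<Rightarrow> real)"
    interpret PS: product_sigma_finite "\<lambda>_::nat. dens01 (qc m n (fst \<theta>) (snd \<theta>))" by (rule prod_sf[OF P])
    show "emeasure (PiM {1..k} (\<lambda>_. dens01 (qc m n (fst \<theta>) (snd \<theta>)))) X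
      = (\<Prod>i\<in>{1..k}. emeasure (dens01 (qc m n (fst \<theta>) (snd \<theta>))) (E i))"
      unfolding XE by (rule PS.emeasure_PiM) (use E in auto)
  qed
  then show "(\<lambda>\<theta>. emeasure (PiM {1..k} (\<lambda>_. dens01 (qc m n (fst \<theta>) (snd \<theta>)))) X) \<in> borel_measurable A"
    using jm E by (simp add: borel_measurable_prod_ennreal)
next
  show "(\<lambda>\<theta>. emeasure (PiM {1..k} (\<lambda>_. dens01 (qc m n (fst \<theta>) (snd \<theta>))))
      (space (PiM {1..k} (\<lambda>_. borel :: real measure)))) \<in> borel_measurable A"
  proof -
    have "\<And>\<theta>. emeasure (PiM {1..k} (\<lambda>_. dens01 (qc m n (fst \<theta>) (snd \<theta>))))
      (space (PiM {1..k} (\<lambda>_. borel :: real measure))) = 1"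
    proof -
      fix \<theta> :: "(nat \<Rightarrow> real) \<times> (nat \<Rightarrow> real)"
      interpret PP: prob_space "PiM {1..k} (\<lambda>_. dens01 (qc m n (fst \<theta>) (snd \<theta>)))"
        by (intro prob_space_PiM P)
      have spe: "space (PiM {1..k} (\<lambda>_. borel :: real measure)) = space (PiM {1..k} (\<lambda>_. dens01 (qc m n (fst \<theta>) (snd \<theta>))))"
        by (simp add: space_PiM)
      then show "emeasure (PiM {1..k} (\<lambda>_. dens01 (qc m n (fst \<theta>) (snd \<theta>))))
      (space (PiM {1..k} (\<lambda>_. borel :: real measure))) = 1" by (subst spe) (rule PP.emeasure_space_1)
    qed
    then show ?thesis by simp
  qed
qed

end

lemma rates:
  fixes \<gamma> :: real and n :: nat
  assumes g: "\<gamma> > 1/2" and n: "n \<ge> 1"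
  defines "m \<equiv> m_of \<gamma> n" and "r \<equiv> real n powr (- (2 * \<gamma>) / (2 * \<gamma> + 1))"
  shows "1 \<le> m" "1 / real m powr (2 * \<gamma>) \<le> 4 powr \<gamma> * r" "real m / real n \<le> r"
    "real m ^ 3 / (real n)\<^sup>2 \<le> r"
proof -
  define a where "a = real n powr (1 / (2 * \<gamma> + 1))"
  have n1: "1 \<le> real n" using n by simp
  have gp: "0 < 2 * \<gamma> + 1" using g by simp
  have a1: "1 \<le> a" unfolding a_def using n1 gp by (intro ge_one_powr_ge_zero) auto
  have mfl: "real m = of_int \<lfloor>a\<rfloor>" unfolding m_def m_of_def a_def[symmetric] using a1 by simp
  have ma: "real m \<le> a" using mfl by simp
  have m1: "1 \<le> real m" using mfl a1 by (simp add: le_floor_iff)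
  then show "1 \<le> m" by simp
  have ma2: "a / 2 \<le> real m"
  proof (cases "a < 2")
    case True then show ?thesis using m1 by simp
  next
    case False
    have "a - 1 < real m" using mfl by linarith
    then show ?thesis using False by simp
  qed
  have apow: "\<And>x. a powr x = real n powr (x / (2 * \<gamma> + 1))"
    unfolding a_def by (simp add: powr_powr)
  have rdef: "r = real n powr (- (2 * \<gamma>) / (2 * \<gamma> + 1))" by (simp add: r_def)
  show "1 / real m powr (2 * \<gamma>) \<le> 4 powr \<gamma> * r"
  proof -
    have "(a / 2) powr (2 * \<gamma>) \<le> real m powr (2 * \<gamma>)"
      using ma2 a1 g by (intro powr_mono2) auto
    moreover have "(a / 2) powr (2 * \<gamma>) = a powr (2 * \<gamma>) / 2 powr (2 * \<gamma>)"
      using a1 by (simp add: powr_divide)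
    moreover have "2 powr (2 * \<gamma>) = 4 powr \<gamma>"
      by (simp add: powr_powr[symmetric])
    moreover have "a powr (2 * \<gamma>) > 0" using a1 by simp
    ultimately have "1 / real m powr (2 * \<gamma>) \<le> 4 powr \<gamma> / a powr (2 * \<gamma>)"
      by (simp add: divide_simps mult.commute) (smt (verit, best) mult_left_mono powr_gt_zero)
    also have "4 powr \<gamma> / a powr (2 * \<gamma>) = 4 powr \<gamma> * r"
      unfolding apow rdef by (simp add: powr_minus divide_inverse)
    finally show ?thesis .
  qed
  show "real m / real n \<le> r"
  proof -
    have "real m / real n \<le> a / real n" using ma n1 by (simp add: divide_right_mono)
    also have "a / real n = real n powr (1 / (2 * \<gamma> + 1) - 1)"
      unfolding a_def using n1 by (simp add: powr_diff)
    also have "1 / (2 * \<gamma> + 1) - 1 = - (2 * \<gamma>) / (2 * \<gamma> + 1)" using gp by (simp add: field_simps)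
    finally show ?thesis unfolding rdef .
  qed
  show "real m ^ 3 / (real n)\<^sup>2 \<le> r"
  proof -
    have "real m ^ 3 \<le> a ^ 3" using ma m1 by (intro power_mono) auto
    have n2: "(real n)\<^sup>2 = real n powr 2" using n1 by (simp add: powr_realpow)
    have "real m ^ 3 / real n powr 2 \<le> a ^ 3 / real n powr 2"
      using \<open>real m ^ 3 \<le> a ^ 3\<close> n1 by (simp add: divide_right_mono)
    also have "a ^ 3 = a powr 3" using a1 by (simp add: powr_realpow)
    also have "a powr 3 / real n powr 2 = real n powr (3 / (2 * \<gamma> + 1) - 2)"
      unfolding apow using n1 by (simp add: powr_diff)
    also have "\<dots> \<le> real n powr (- (2 * \<gamma>) / (2 * \<gamma> + 1))"
    proof (rule powr_mono[OF _ n1])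
      have "3 / (2 * \<gamma> + 1) - 2 = (1 - 4 * \<gamma>) / (2 * \<gamma> + 1)" using gp by (simp add: field_simps)
      also have "\<dots> \<le> - (2 * \<gamma>) / (2 * \<gamma> + 1)" using gp g by (intro divide_right_mono) auto
      finally show "3 / (2 * \<gamma> + 1) - 2 \<le> - (2 * \<gamma>) / (2 * \<gamma> + 1)" .
    qed
    finally show ?thesis unfolding rdef n2 .
  qed
qed


lemma space_laplace[simp]: "space (laplace_dist a c n m) = UNIV"
  by (simp add: laplace_dist_def)
lemma sets_laplace[simp, measurable_cong]: "sets (laplace_dist a c n m) = sets borel"
  by (simp add: laplace_dist_def)

lemma ennreal_div_bound:
  fixes x :: ennreal and t B :: real
  assumes t: "t > 0" and B: "0 \<le> B" and le: "ennreal t * x \<le> ennreal B"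
  shows "x \<le> ennreal (B / t)"
proof -
  have one: "ennreal (1 / t) * ennreal t = 1" using t by (simp add: ennreal_mult[symmetric])
  have "x = ennreal (1 / t) * (ennreal t * x)" by (simp add: mult.assoc[symmetric] one)
  also have "\<dots> \<le> ennreal (1 / t) * ennreal B" by (intro mult_left_mono le) auto
  also have "\<dots> = ennreal (B / t)" using t B by (simp add: ennreal_mult[symmetric])
  finally show ?thesis .
qed

locale mainctx = sob +
  fixes n k :: nat and \<alpha> :: real
  assumes n1: "n \<ge> 1" and kn: "k \<ge> n" and alpha: "\<alpha> > 0" and c0pos: "c0 > 0"
    and c0def: "c0 = c0_of \<psi>" and gam: "\<gamma> > 1/2"
begin

abbreviation "m \<equiv> m_of \<gamma> n"
abbreviation "PX \<equiv> PiM {1..n} (\<lambda>_. dens01 p)"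
abbreviation "Lap \<equiv> laplace_dist \<alpha> c0 n m"
abbreviation "PV \<equiv> PiM {1..m} (\<lambda>_. Lap)"
abbreviation "KZ X \<nu> \<equiv> PiM {1..k} (\<lambda>_. dens01 (qc m n X \<nu>))"
abbreviation "PXb \<equiv> PiM {1..n} (\<lambda>_. borel :: real measure)"
abbreviation "PVb \<equiv> PiM {1..m} (\<lambda>_. borel :: real measure)"
abbreviation "PZb \<equiv> PiM {1..k} (\<lambda>_. borel :: real measure)"
abbreviation "Nb \<equiv> PXb \<Otimes>\<^sub>M (PVb \<Otimes>\<^sub>M PZb)"

definition K1 :: real where "K1 = 2 * (2 + C\<^sup>2)"
definition lam :: real where "lam = real n * \<alpha> / (c0 * real m)"

definition errZ :: "(nat \<Rightarrow> real) \<Rightarrow> real" where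
  "errZ Z = T m + (\<Sum>j=1..m. ((\<Sum>i\<in>{1..k}. psi' j (Z i)) / real k - \<beta> j)\<^sup>2)"

definition dX :: "(nat \<Rightarrow> real) \<Rightarrow> real" where
  "dX X = (\<Sum>j=1..m. ((\<Sum>i\<in>{1..n}. \<psi> j (X i)) / real n - \<beta> j)\<^sup>2)"

lemma m1: "m \<ge> 1" using rates(1)[OF gam n1] .
lemma k1: "k \<ge> 1" using n1 kn by simp
lemma lam_pos: "lam > 0" unfolding lam_def using n1 alpha c0pos m1 by simp

lemma errZ_eq: "errZ Z = T m + (\<Sum>j=1..m. ((\<Sum>i\<in>{1..k}. \<psi> j (Z i)) / real k - \<beta> j)\<^sup>2)"
  unfolding errZ_def psi'_def by (intro arg_cong2[where f="(+)"] refl sum.cong) auto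

lemma L2err_eq: "L2err01 p (phatZ \<psi> m k Z) = errZ Z"
proof -
  have "L2err01 p (phatZ \<psi> m k Z) = integral\<^sup>L N01 (\<lambda>x. (p x - 1 - (\<Sum>j=1..m. ((\<Sum>i=1..k. \<psi> j (Z i)) / real k) * \<psi> j x))\<^sup>2)"
    unfolding L2err01_def phatZ_def set_integral_N01 by (simp add: diff_diff_eq)
  also have "\<dots> = errZ Z" unfolding err_formula errZ_eq ..
  finally show ?thesis .
qed

lemma errZ_meas: "errZ \<in> borel_measurable PZb"
  unfolding errZ_def by measurable

lemma lap_eq: "Lap = density lborel (\<lambda>v. ennreal (lam / 2 * exp (- (lam * \<bar>v\<bar>))))"
  unfolding laplace_dist_def lam_def
  by (intro arg_cong2[where f=density] refl ext arg_cong[where f=ennreal]) (simp add: field_simps)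

lemma lap_prob: "prob_space Lap" using lap_facts(1)[OF lam_pos] lap_eq by simp

lemma lap_int: "integrable Lap (\<lambda>v. v\<^sup>2)" "integral\<^sup>L Lap (\<lambda>v. v\<^sup>2) = 2 / lam\<^sup>2"
proof -
  have nn: "(\<integral>\<^sup>+ v. ennreal (v\<^sup>2) \<partial>Lap) = ennreal (2 / lam\<^sup>2)"
    using lap_facts(2)[OF lam_pos] lap_eq by simp
  show "integrable Lap (\<lambda>v. v\<^sup>2)"
    by (rule integrableI_nonneg) (auto simp: nn)
  show "integral\<^sup>L Lap (\<lambda>v. v\<^sup>2) = 2 / lam\<^sup>2"
    by (subst integral_eq_nn_integral) (auto simp: nn)
qed

lemma qhat_lin: "qhat \<psi> m n X \<nu> = (\<lambda>y. 1 + (\<Sum>j=1..m. ((\<Sum>i=1..n. \<psi> j (X i)) / real n + \<nu> j) * \<psi> j y))"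
  unfolding qhat_def ..

lemma qc_facts:
  shows "qc m n X \<nu> \<in> borel_measurable borel" "\<And>x. x \<in> {0..1} \<Longrightarrow> 0 \<le> qc m n X \<nu> x"
    "integrable N01 (\<lambda>x. (qc m n X \<nu> x)\<^sup>2)" "integral\<^sup>L N01 (qc m n X \<nu>) = 1"
    "integral\<^sup>L N01 (\<lambda>x. (qc m n X \<nu> x - p x)\<^sup>2) \<le> K1 * (T m + (\<Sum>j=1..m. ((\<Sum>i=1..n. \<psi> j (X i)) / real n + \<nu> j - \<beta> j)\<^sup>2))"
    "prob_space (dens01 (qc m n X \<nu>))"
proof -
  let ?d = "\<lambda>j. (\<Sum>i=1..n. \<psi> j (X i)) / real n + \<nu> j"
  let ?q = "\<lambda>y. 1 + (\<Sum>j=1..m. ?d j * \<psi> j y)"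
  note Q = qlin_facts[of ?d m]
  have qN: "?q \<in> borel_measurable N01" using meas_N01[OF Q(1)] .
  note CB = corr_bound[OF qN Q(2) Q(3)]
  let ?I = "integral\<^sup>L N01 (\<lambda>x. max (?q x) 0)"
  have qcd: "qc m n X \<nu> = (\<lambda>y. max (?q y) 0 / ?I)" unfolding qc_def qhat_lin ..
  show qm: "qc m n X \<nu> \<in> borel_measurable borel" by (rule qc_meas1)
  show q0: "\<And>x. x \<in> {0..1} \<Longrightarrow> 0 \<le> qc m n X \<nu> x" unfolding qcd using CB(1) by simp
  show qL2: "integrable N01 (\<lambda>x. (qc m n X \<nu> x)\<^sup>2)"
  proof (rule Bochner_Integration.integrable_bound[OF Q(2)])
    show "AE x in N01. norm ((qc m n X \<nu> x)\<^sup>2) \<le> norm ((?q x)\<^sup>2)"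
    proof (rule AE_I2)
      fix x
      have "(max (?q x) 0 / ?I)\<^sup>2 \<le> (max (?q x) 0)\<^sup>2" using CB(1)
        by (simp add: power_divide) (intro divide_le_self, auto simp: one_le_power)
      also have "\<dots> \<le> (?q x)\<^sup>2" by (cases "?q x \<ge> 0") auto
      finally show "norm ((qc m n X \<nu> x)\<^sup>2) \<le> norm ((?q x)\<^sup>2)" unfolding qcd by simp
    qed
  qed (use meas_N01[OF qm] in auto)
  show q1: "integral\<^sup>L N01 (qc m n X \<nu>) = 1" unfolding qcd using CB(1) by simp
  show "integral\<^sup>L N01 (\<lambda>x. (qc m n X \<nu> x - p x)\<^sup>2) \<le> K1 * (T m + (\<Sum>j=1..m. (?d j - \<beta> j)\<^sup>2))"
    using CB(3) Q(4) unfolding qcd K1_def by simp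
  show "prob_space (dens01 (qc m n X \<nu>))"
    by (rule dens01_facts(1)[OF qm q0 L2_L1[OF meas_N01[OF qm] qL2] q1])
qed

lemma sets_PX: "sets PX = sets PXb" by (intro sets_PiM_cong) auto
lemma sets_PV: "sets PV = sets PVb" by (intro sets_PiM_cong) auto
lemma sets_KZ: "sets (KZ X \<nu>) = sets PZb" by (intro sets_PiM_cong) auto
lemma space_PX: "space PX = space PXb" by (simp add: space_PiM)
lemma space_PV: "space PV = space PVb" by (simp add: space_PiM)
lemma space_KZ: "space (KZ X \<nu>) = space PZb" by (simp add: space_PiM)

lemma M1: "(\<lambda>\<theta>. KZ (fst \<theta>) (snd \<theta>)) \<in> measurable (PX \<Otimes>\<^sub>M PV) (subprob_algebra PZb)"
proof -
  have "(\<lambda>\<theta>. KZ (fst \<theta>) (snd \<theta>)) \<in> measurable (PXb \<Otimes>\<^sub>M PVb) (subprob_algebra PZb)"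
    by (rule Kmeas) (rule qc_facts(6))
  then show ?thesis
    by (subst measurable_cong_sets[OF sets_pair_measure_cong[OF sets_PX sets_PV] refl])
qed

lemma M2: "(\<lambda>w. return Nb (fst (fst w), snd (fst w), snd w)) \<in> measurable ((PX \<Otimes>\<^sub>M PV) \<Otimes>\<^sub>M PZb) (subprob_algebra Nb)"
proof -
  have "(\<lambda>w. (fst (fst w), snd (fst w), snd w)) \<in> measurable ((PXb \<Otimes>\<^sub>M PVb) \<Otimes>\<^sub>M PZb) Nb"
    by measurable
  then have "(\<lambda>w. (fst (fst w), snd (fst w), snd w)) \<in> measurable ((PX \<Otimes>\<^sub>M PV) \<Otimes>\<^sub>M PZb) Nb"
    by (subst measurable_cong_sets[OF sets_pair_measure_cong[OF sets_pair_measure_cong[OF sets_PX sets_PV] refl] refl])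
  from measurable_compose[OF this return_measurable] show ?thesis .
qed

lemma M3: "(\<lambda>\<theta>. bind (KZ (fst \<theta>) (snd \<theta>)) (\<lambda>Z. return Nb (fst \<theta>, snd \<theta>, Z)))
    \<in> measurable (PX \<Otimes>\<^sub>M PV) (subprob_algebra Nb)"
  by (rule measurable_bind[OF M1]) (use M2 in simp)

lemma PV_space: "PV \<in> space (subprob_algebra PV)"
  using prob_space_PiM[where M="\<lambda>_. Lap" and I="{1..m}"] lap_prob
  by (simp add: space_subprob_algebra prob_space_imp_subprob_space)

lemma M4: "(\<lambda>X. bind PV (\<lambda>\<nu>. bind (KZ X \<nu>) (\<lambda>Z. return Nb (X, \<nu>, Z))))
    \<in> measurable PX (subprob_algebra Nb)"
  by (rule measurable_bind[OF measurable_const[OF PV_space]]) (use M3 in simp)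

lemma joint_eq: "joint_law \<psi> \<alpha> \<gamma> p n k =
   bind PX (\<lambda>X. bind PV (\<lambda>\<nu>. bind (KZ X \<nu>) (\<lambda>Z. return Nb (X, \<nu>, Z))))"
proof -
  have e: "\<And>X \<nu>. dens01 (qcorr (qhat \<psi> m n X \<nu>)) = dens01 (qc m n X \<nu>)"
  proof -
    fix X \<nu>
    let ?d = "\<lambda>j. (\<Sum>i=1..n. \<psi> j (X i)) / real n + \<nu> j"
    have "integral\<^sup>L N01 (qhat \<psi> m n X \<nu>) = 1" unfolding qhat_lin using qlin_facts(3)[of ?d m] .
    from qcorr_eq[OF this] show "dens01 (qcorr (qhat \<psi> m n X \<nu>)) = dens01 (qc m n X \<nu>)"
      unfolding qc_def .
  qed
  show ?thesis unfolding joint_law_def c0def[symmetric] e ..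
qed

lemma f_meas: "(\<lambda>\<omega>. ennreal (errZ (snd (snd \<omega>)))) \<in> borel_measurable Nb"
  using errZ_meas by measurable

definition R1 :: real where "R1 = T m + real m * c0\<^sup>2 / real k + K1 * T m"
definition R2 :: real where "R2 = 2 * K1 * (real m * (2 / lam\<^sup>2))"

lemma K1_nonneg: "0 \<le> K1" unfolding K1_def by simp

lemma Zb: "(\<integral>\<^sup>+ Z. ennreal (errZ Z) \<partial>KZ X \<nu>) \<le> ennreal (R1 + 2 * K1 * dX X + 2 * K1 * (\<Sum>j=1..m. (\<nu> j)\<^sup>2))"
proof -
  let ?bh = "\<lambda>j. (\<Sum>i=1..n. \<psi> j (X i)) / real n"
  have "(\<integral>\<^sup>+ Z. ennreal (errZ Z) \<partial>KZ X \<nu>) \<le>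
      ennreal (T m + real m * c0\<^sup>2 / real k + integral\<^sup>L N01 (\<lambda>x. (qc m n X \<nu> x - p x)\<^sup>2))"
    unfolding errZ_eq by (rule Zlevel[OF qc_facts(1-4) k1])
  also have "\<dots> \<le> ennreal (R1 + 2 * K1 * dX X + 2 * K1 * (\<Sum>j=1..m. (\<nu> j)\<^sup>2))"
  proof (rule ennreal_leI)
    have "(\<Sum>j=1..m. (?bh j + \<nu> j - \<beta> j)\<^sup>2) \<le> (\<Sum>j=1..m. 2 * (?bh j - \<beta> j)\<^sup>2 + 2 * (\<nu> j)\<^sup>2)"
    proof (rule sum_mono)
      fix j
      have "(?bh j + \<nu> j - \<beta> j)\<^sup>2 = ((?bh j - \<beta> j) + \<nu> j)\<^sup>2" by (simp add: algebra_simps)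
      also have "\<dots> \<le> 2 * (?bh j - \<beta> j)\<^sup>2 + 2 * (\<nu> j)\<^sup>2"
        using sum_squares_bound[of "?bh j - \<beta> j" "\<nu> j"] by (simp add: power2_sum)
      finally show "(?bh j + \<nu> j - \<beta> j)\<^sup>2 \<le> 2 * (?bh j - \<beta> j)\<^sup>2 + 2 * (\<nu> j)\<^sup>2" .
    qed
    also have "\<dots> = 2 * dX X + 2 * (\<Sum>j=1..m. (\<nu> j)\<^sup>2)"
      unfolding dX_def by (simp add: sum.distrib sum_distrib_left)
    finally have s: "(\<Sum>j=1..m. (?bh j + \<nu> j - \<beta> j)\<^sup>2) \<le> 2 * dX X + 2 * (\<Sum>j=1..m. (\<nu> j)\<^sup>2)" .
    have "integral\<^sup>L N01 (\<lambda>x. (qc m n X \<nu> x - p x)\<^sup>2) \<le> K1 * (T m + (\<Sum>j=1..m. (?bh j + \<nu> j - \<beta> j)\<^sup>2))"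
      by (rule qc_facts(5))
    also have "\<dots> \<le> K1 * (T m + (2 * dX X + 2 * (\<Sum>j=1..m. (\<nu> j)\<^sup>2)))"
      using s K1_nonneg by (intro mult_left_mono) auto
    finally show "T m + real m * c0\<^sup>2 / real k + integral\<^sup>L N01 (\<lambda>x. (qc m n X \<nu> x - p x)\<^sup>2)
        \<le> R1 + 2 * K1 * dX X + 2 * K1 * (\<Sum>j=1..m. (\<nu> j)\<^sup>2)"
      unfolding R1_def by (simp add: algebra_simps)
  qed
  finally show ?thesis .
qed

lemma Vb: "(\<integral>\<^sup>+ \<nu>. ennreal (R1 + 2 * K1 * dX X + 2 * K1 * (\<Sum>j=1..m. (\<nu> j)\<^sup>2)) \<partial>PV)
    = ennreal (R1 + 2 * K1 * dX X + R2)"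
proof -
  interpret P: prob_space PV by (intro prob_space_PiM lap_prob)
  have ij: "\<And>j. j \<in> {1..m} \<Longrightarrow> integrable PV (\<lambda>\<nu>. (\<nu> j)\<^sup>2) \<and> integral\<^sup>L PV (\<lambda>\<nu>. (\<nu> j)\<^sup>2) = 2 / lam\<^sup>2"
    using prod_int1[OF lap_prob finite_atLeastAtMost _ lap_int(1)] lap_int(2) by auto
  have isum: "integrable PV (\<lambda>\<nu>. \<Sum>j=1..m. (\<nu> j)\<^sup>2)" using ij by (intro Bochner_Integration.integrable_sum) auto
  have R1n: "0 \<le> R1" unfolding R1_def using T_nonneg K1_nonneg by simp
  have dXn: "0 \<le> dX X" unfolding dX_def by (simp add: sum_nonneg)
  have "(\<integral>\<^sup>+ \<nu>. ennreal (R1 + 2 * K1 * dX X + 2 * K1 * (\<Sum>j=1..m. (\<nu> j)\<^sup>2)) \<partial>PV)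
     = ennreal (integral\<^sup>L PV (\<lambda>\<nu>. R1 + 2 * K1 * dX X + 2 * K1 * (\<Sum>j=1..m. (\<nu> j)\<^sup>2)))"
  proof (rule nn_integral_eq_integral)
    show "integrable PV (\<lambda>\<nu>. R1 + 2 * K1 * dX X + 2 * K1 * (\<Sum>j=1..m. (\<nu> j)\<^sup>2))"
      using isum by (intro Bochner_Integration.integrable_add P.integrable_const integrable_mult_right)
    show "AE x in PV. 0 \<le> R1 + 2 * K1 * dX X + 2 * K1 * (\<Sum>j=1..m. (x j)\<^sup>2)"
      using R1n dXn K1_nonneg by (intro AE_I2) (simp add: sum_nonneg)
  qed
  also have "integral\<^sup>L PV (\<lambda>\<nu>. R1 + 2 * K1 * dX X + 2 * K1 * (\<Sum>j=1..m. (\<nu> j)\<^sup>2))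
     = integral\<^sup>L PV (\<lambda>_. R1 + 2 * K1 * dX X) + 2 * K1 * integral\<^sup>L PV (\<lambda>\<nu>. \<Sum>j=1..m. (\<nu> j)\<^sup>2)"
    by (subst Bochner_Integration.integral_add[OF P.integrable_const integrable_mult_right[OF isum]]) simp
  also have "integral\<^sup>L PV (\<lambda>\<nu>. \<Sum>j=1..m. (\<nu> j)\<^sup>2) = (\<Sum>j=1..m. integral\<^sup>L PV (\<lambda>\<nu>. (\<nu> j)\<^sup>2))"
    using ij by (intro Bochner_Integration.integral_sum) auto
  also have "\<dots> = (\<Sum>j=1..m. 2 / lam\<^sup>2)" using ij by (intro sum.cong) auto
  also have "integral\<^sup>L PV (\<lambda>_. R1 + 2 * K1 * dX X) = R1 + 2 * K1 * dX X" using P.prob_space by simp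
  finally show ?thesis unfolding R2_def by simp
qed

lemma Xb: "(\<integral>\<^sup>+ X. ennreal (R1 + 2 * K1 * dX X + R2) \<partial>PX)
    \<le> ennreal (R1 + R2 + 2 * K1 * (real m * c0\<^sup>2 / real n))"
proof -
  have pi: "integrable N01 p" by (rule p_int)
  note D = dens01_facts[OF p_meas p_nonneg pi p_int1]
  interpret P: prob_space PX by (intro prob_space_PiM D(1))
  have hm: "\<And>j. j \<ge> 1 \<Longrightarrow> \<psi> j \<in> borel_measurable (dens01 p)" using psi_meas meas_dens01_iff by blast
  have hb: "\<And>j. j \<ge> 1 \<Longrightarrow> AE x in dens01 p. \<bar>\<psi> j x\<bar> \<le> c0"
  proof -
    fix j :: nat assume j: "j \<ge> 1"
    show "AE x in dens01 p. \<bar>\<psi> j x\<bar> \<le> c0"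
    proof (rule AE_mp[OF D(2)])
      show "AE x in dens01 p. x \<in> {0..1} \<longrightarrow> \<bar>\<psi> j x\<bar> \<le> c0"
        by (intro AE_I2 impI psi_bnd[OF j])
    qed
  qed
  have Ne: "{1..n} \<noteq> {}" using n1 by auto
  have cn: "card {1..n} = n" by simp
  have Qb: "\<And>j. j \<ge> 1 \<Longrightarrow> integral\<^sup>L (dens01 p) (\<psi> j) = \<beta> j"
    using D(3) psi_meas beta_eq by simp
  let ?a = "\<lambda>j X. ((\<Sum>i\<in>{1..n}. \<psi> j (X i)) / real n - \<beta> j)\<^sup>2"
  have ij: "\<And>j. j \<in> {1..m} \<Longrightarrow> integrable PX (?a j) \<and> integral\<^sup>L PX (?a j) \<le> c0\<^sup>2 / real n"
  proof -
    fix j assume j: "j \<in> {1..m}"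
    then have j1: "j \<ge> 1" by simp
    note V = var_bound[OF D(1) hm[OF j1] hb[OF j1] finite_atLeastAtMost Ne, of "\<beta> j", unfolded cn]
    show "integrable PX (?a j) \<and> integral\<^sup>L PX (?a j) \<le> c0\<^sup>2 / real n"
      using V Qb[OF j1] by simp
  qed
  have idx: "integrable PX dX" unfolding dX_def using ij by (intro Bochner_Integration.integrable_sum) auto
  have R1n: "0 \<le> R1" unfolding R1_def using T_nonneg K1_nonneg by simp
  have R2n: "0 \<le> R2" unfolding R2_def using K1_nonneg by simp
  have dXn: "\<And>X. 0 \<le> dX X" unfolding dX_def by (simp add: sum_nonneg)
  have eqn: "(\<integral>\<^sup>+ X. ennreal (R1 + 2 * K1 * dX X + R2) \<partial>PX) = ennreal (integral\<^sup>L PX (\<lambda>X. R1 + 2 * K1 * dX X + R2))"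
  proof (rule nn_integral_eq_integral)
    show "integrable PX (\<lambda>X. R1 + 2 * K1 * dX X + R2)"
      using idx by (intro Bochner_Integration.integrable_add P.integrable_const integrable_mult_right)
    show "AE x in PX. 0 \<le> R1 + 2 * K1 * dX x + R2"
      using R1n R2n dXn K1_nonneg by (intro AE_I2) simp
  qed
  have "integral\<^sup>L PX (\<lambda>X. R1 + 2 * K1 * dX X + R2) = R1 + R2 + 2 * K1 * integral\<^sup>L PX dX"
  proof -
    have "integral\<^sup>L PX (\<lambda>X. R1 + 2 * K1 * dX X + R2) = integral\<^sup>L PX (\<lambda>X. (R1 + R2) + 2 * K1 * dX X)"
      by (simp add: algebra_simps)
    also have "\<dots> = integral\<^sup>L PX (\<lambda>X. R1 + R2) + integral\<^sup>L PX (\<lambda>X. 2 * K1 * dX X)"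
      by (rule Bochner_Integration.integral_add[OF P.integrable_const integrable_mult_right[OF idx]])
    also have "integral\<^sup>L PX (\<lambda>X. R1 + R2) = R1 + R2" using P.prob_space by simp
    also have "integral\<^sup>L PX (\<lambda>X. 2 * K1 * dX X) = 2 * K1 * integral\<^sup>L PX dX" by simp
    finally show ?thesis .
  qed
  also have "integral\<^sup>L PX dX = (\<Sum>j=1..m. integral\<^sup>L PX (?a j))"
    unfolding dX_def using ij by (intro Bochner_Integration.integral_sum) auto
  also have "\<dots> \<le> (\<Sum>j=1..m. c0\<^sup>2 / real n)" using ij by (intro sum_mono) auto
  finally have "integral\<^sup>L PX (\<lambda>X. R1 + 2 * K1 * dX X + R2) \<le> R1 + R2 + 2 * K1 * (real m * c0\<^sup>2 / real n)"
    using K1_nonneg by (simp add: mult_left_mono)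
  then show ?thesis unfolding eqn by (rule ennreal_leI)
qed

lemma total: "(\<integral>\<^sup>+ \<omega>. ennreal (errZ (snd (snd \<omega>))) \<partial>joint_law \<psi> \<alpha> \<gamma> p n k)
    \<le> ennreal (R1 + R2 + 2 * K1 * (real m * c0\<^sup>2 / real n))"
proof -
  let ?f = "\<lambda>\<omega>. ennreal (errZ (snd (snd \<omega>)))"
  have "(\<integral>\<^sup>+ \<omega>. ?f \<omega> \<partial>joint_law \<psi> \<alpha> \<gamma> p n k) =
     (\<integral>\<^sup>+ X. \<integral>\<^sup>+ \<omega>. ?f \<omega> \<partial>bind PV (\<lambda>\<nu>. bind (KZ X \<nu>) (\<lambda>Z. return Nb (X, \<nu>, Z))) \<partial>PX)"
    unfolding joint_eq by (rule nn_integral_bind[OF f_meas M4])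
  also have "\<dots> \<le> (\<integral>\<^sup>+ X. ennreal (R1 + 2 * K1 * dX X + R2) \<partial>PX)"
  proof (rule nn_integral_mono)
    fix X assume X: "X \<in> space PX"
    have M3X: "(\<lambda>\<nu>. bind (KZ X \<nu>) (\<lambda>Z. return Nb (X, \<nu>, Z))) \<in> measurable PV (subprob_algebra Nb)"
      using measurable_Pair2[OF M3 X] by simp
    have "(\<integral>\<^sup>+ \<omega>. ?f \<omega> \<partial>bind PV (\<lambda>\<nu>. bind (KZ X \<nu>) (\<lambda>Z. return Nb (X, \<nu>, Z))))
        = (\<integral>\<^sup>+ \<nu>. \<integral>\<^sup>+ \<omega>. ?f \<omega> \<partial>bind (KZ X \<nu>) (\<lambda>Z. return Nb (X, \<nu>, Z)) \<partial>PV)"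
      by (rule nn_integral_bind[OF f_meas M3X])
    also have "\<dots> \<le> (\<integral>\<^sup>+ \<nu>. ennreal (R1 + 2 * K1 * dX X + 2 * K1 * (\<Sum>j=1..m. (\<nu> j)\<^sup>2)) \<partial>PV)"
    proof (rule nn_integral_mono)
      fix \<nu> assume \<nu>: "\<nu> \<in> space PV"
      have Xn: "(X, \<nu>) \<in> space (PX \<Otimes>\<^sub>M PV)" using X \<nu> by (simp add: space_pair_measure)
      have M2Z: "(\<lambda>Z. return Nb (X, \<nu>, Z)) \<in> measurable (KZ X \<nu>) (subprob_algebra Nb)"
        using measurable_Pair2[OF M2 Xn]
        by (subst measurable_cong_sets[OF sets_KZ refl]) simp
      have "(\<integral>\<^sup>+ \<omega>. ?f \<omega> \<partial>bind (KZ X \<nu>) (\<lambda>Z. return Nb (X, \<nu>, Z)))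
          = (\<integral>\<^sup>+ Z. \<integral>\<^sup>+ \<omega>. ?f \<omega> \<partial>return Nb (X, \<nu>, Z) \<partial>KZ X \<nu>)"
        by (rule nn_integral_bind[OF f_meas M2Z])
      also have "\<dots> = (\<integral>\<^sup>+ Z. ennreal (errZ Z) \<partial>KZ X \<nu>)"
      proof (rule nn_integral_cong)
        fix Z assume Z: "Z \<in> space (KZ X \<nu>)"
        have "(X, \<nu>, Z) \<in> space Nb" using X \<nu> Z
          by (simp add: space_pair_measure space_PiM)
        then show "(\<integral>\<^sup>+ \<omega>. ?f \<omega> \<partial>return Nb (X, \<nu>, Z)) = ennreal (errZ Z)"
          using nn_integral_return[OF _ f_meas] by simp
      qed
      also have "\<dots> \<le> ennreal (R1 + 2 * K1 * dX X + 2 * K1 * (\<Sum>j=1..m. (\<nu> j)\<^sup>2))" by (rule Zb)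
      finally show "(\<integral>\<^sup>+ \<omega>. ?f \<omega> \<partial>bind (KZ X \<nu>) (\<lambda>Z. return Nb (X, \<nu>, Z)))
          \<le> ennreal (R1 + 2 * K1 * dX X + 2 * K1 * (\<Sum>j=1..m. (\<nu> j)\<^sup>2))" .
    qed
    also have "\<dots> = ennreal (R1 + 2 * K1 * dX X + R2)" by (rule Vb)
    finally show "(\<integral>\<^sup>+ \<omega>. ?f \<omega> \<partial>bind PV (\<lambda>\<nu>. bind (KZ X \<nu>) (\<lambda>Z. return Nb (X, \<nu>, Z))))
        \<le> ennreal (R1 + 2 * K1 * dX X + R2)" .
  qed
  also have "\<dots> \<le> ennreal (R1 + R2 + 2 * K1 * (real m * c0\<^sup>2 / real n))" by (rule Xb)
  finally show ?thesis .
qed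

lemma sets_joint: "sets (joint_law \<psi> \<alpha> \<gamma> p n k) = sets Nb"
  unfolding joint_eq
  by (rule sets_bind_measurable[OF M4]) (simp add: space_PiM PiE_eq_empty_iff)

definition Kc :: real where
  "Kc = (1 + K1) * C\<^sup>2 * 4 powr \<gamma> + c0\<^sup>2 + 2 * K1 * c0\<^sup>2 + 4 * K1 * c0\<^sup>2 / \<alpha>\<^sup>2"

lemma final_bound: "R1 + R2 + 2 * K1 * (real m * c0\<^sup>2 / real n) \<le> Kc * real n powr (- (2 * \<gamma>) / (2 * \<gamma> + 1))"
proof -
  let ?r = "real n powr (- (2 * \<gamma>) / (2 * \<gamma> + 1))"
  note RT = rates[OF gam n1]
  have K1n: "0 \<le> K1" by (rule K1_nonneg)
  have n0: "real n > 0" using n1 by simp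
  have mn: "real m \<ge> 1" using m1 by simp
  have "T m \<le> C\<^sup>2 / real m powr (2 * \<gamma>)" using T_bound m1 by simp
  also have "\<dots> = C\<^sup>2 * (1 / real m powr (2 * \<gamma>))" by simp
  also have "\<dots> \<le> C\<^sup>2 * (4 powr \<gamma> * ?r)" using RT(2) by (intro mult_left_mono) auto
  finally have t1: "T m \<le> C\<^sup>2 * 4 powr \<gamma> * ?r" by simp
  have t2: "real m * c0\<^sup>2 / real k \<le> c0\<^sup>2 * ?r"
  proof -
    have "real m * c0\<^sup>2 / real k \<le> real m * c0\<^sup>2 / real n"
      using kn n0 by (intro divide_left_mono) auto
    also have "\<dots> = c0\<^sup>2 * (real m / real n)" by simp
    also have "\<dots> \<le> c0\<^sup>2 * ?r" using RT(3) by (intro mult_left_mono) auto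
    finally show ?thesis .
  qed
  have t3: "R2 \<le> 4 * K1 * c0\<^sup>2 / \<alpha>\<^sup>2 * ?r"
  proof -
    have "R2 = 4 * K1 * c0\<^sup>2 / \<alpha>\<^sup>2 * (real m ^ 3 / (real n)\<^sup>2)"
      unfolding R2_def lam_def using n0 mn alpha c0pos by (simp add: field_simps power2_eq_square power3_eq_cube)
    also have "\<dots> \<le> 4 * K1 * c0\<^sup>2 / \<alpha>\<^sup>2 * ?r" using RT(4) K1n by (intro mult_left_mono) auto
    finally show ?thesis .
  qed
  have t4: "2 * K1 * (real m * c0\<^sup>2 / real n) \<le> 2 * K1 * c0\<^sup>2 * ?r"
  proof -
    have "2 * K1 * (real m * c0\<^sup>2 / real n) = 2 * K1 * c0\<^sup>2 * (real m / real n)" by simp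
    also have "\<dots> \<le> 2 * K1 * c0\<^sup>2 * ?r" using RT(3) K1n by (intro mult_left_mono) auto
    finally show ?thesis .
  qed
  have "R1 = (1 + K1) * T m + real m * c0\<^sup>2 / real k" unfolding R1_def by (simp add: algebra_simps)
  also have "(1 + K1) * T m \<le> (1 + K1) * (C\<^sup>2 * 4 powr \<gamma> * ?r)" using t1 K1n by (intro mult_left_mono) auto
  finally have "R1 \<le> (1 + K1) * (C\<^sup>2 * 4 powr \<gamma> * ?r) + c0\<^sup>2 * ?r" using t2 by linarith
  then have "R1 + R2 + 2 * K1 * (real m * c0\<^sup>2 / real n) \<le>
      (1 + K1) * (C\<^sup>2 * 4 powr \<gamma> * ?r) + c0\<^sup>2 * ?r + 4 * K1 * c0\<^sup>2 / \<alpha>\<^sup>2 * ?r + 2 * K1 * c0\<^sup>2 * ?r"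
    using t3 t4 by linarith
  also have "\<dots> = Kc * ?r" unfolding Kc_def by (simp add: algebra_simps)
  finally show ?thesis .
qed

lemma event:
  fixes Mc :: real
  assumes Mc: "Mc > 0"
  defines "r \<equiv> real n powr (- (2 * \<gamma>) / (2 * \<gamma> + 1))"
  defines "J \<equiv> joint_law \<psi> \<alpha> \<gamma> p n k"
  shows "{\<omega> \<in> space J. L2err01 p (phatZ \<psi> m k (snd (snd \<omega>))) > Mc * r} \<in> sets J"
    "measure J {\<omega> \<in> space J. L2err01 p (phatZ \<psi> m k (snd (snd \<omega>))) > Mc * r} \<le> Kc / Mc"
proof -
  have rp: "r > 0" unfolding r_def using n1 by simp
  let ?A = "{\<omega> \<in> space J. Mc * r < errZ (snd (snd \<omega>))}"
  have eqA: "{\<omega> \<in> space J. L2err01 p (phatZ \<psi> m k (snd (snd \<omega>))) > Mc * r} = ?A"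
    by (simp add: L2err_eq)
  have gm: "(\<lambda>\<omega>. errZ (snd (snd \<omega>))) \<in> borel_measurable J"
  proof -
    have "(\<lambda>\<omega>. errZ (snd (snd \<omega>))) \<in> borel_measurable Nb" using errZ_meas by measurable
    then show ?thesis unfolding J_def by (subst measurable_cong_sets[OF sets_joint refl])
  qed
  have Asets: "?A \<in> sets J" using gm by measurable
  then show "{\<omega> \<in> space J. L2err01 p (phatZ \<psi> m k (snd (snd \<omega>))) > Mc * r} \<in> sets J"
    unfolding eqA .
  let ?B = "R1 + R2 + 2 * K1 * (real m * c0\<^sup>2 / real n)"
  have Bn: "0 \<le> ?B" unfolding R1_def R2_def using T_nonneg K1_nonneg n1 by simp
  have "ennreal (Mc * r) * emeasure J ?A = (\<integral>\<^sup>+ \<omega>. ennreal (Mc * r) * indicator ?A \<omega> \<partial>J)"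
    using nn_integral_cmult_indicator[OF Asets, of "ennreal (Mc * r)"] by simp
  also have "\<dots> \<le> (\<integral>\<^sup>+ \<omega>. ennreal (errZ (snd (snd \<omega>))) \<partial>J)"
  proof (rule nn_integral_mono)
    fix \<omega> assume "\<omega> \<in> space J"
    then show "ennreal (Mc * r) * indicator ?A \<omega> \<le> ennreal (errZ (snd (snd \<omega>)))"
      by (cases "Mc * r < errZ (snd (snd \<omega>))") (auto simp: indicator_def intro: ennreal_leI)
  qed
  also have "\<dots> \<le> ennreal ?B" unfolding J_def by (rule total)
  finally have "emeasure J ?A \<le> ennreal (?B / (Mc * r))"
    by (intro ennreal_div_bound) (use Mc rp Bn in auto)
  then have "measure J ?A \<le> ?B / (Mc * r)"
    unfolding measure_def using Mc rp Bn by (intro enn2real_leI) auto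
  also have "\<dots> \<le> Kc * r / (Mc * r)"
    using final_bound Mc rp unfolding r_def by (intro divide_right_mono) auto
  also have "\<dots> = Kc / Mc" using rp by simp
  finally show "measure J {\<omega> \<in> space J. L2err01 p (phatZ \<psi> m k (snd (snd \<omega>))) > Mc * r} \<le> Kc / Mc"
    unfolding eqA .
qed

end

theorem mainTheorem13:
  fixes \<psi> :: "nat \<Rightarrow> real \<Rightarrow> real" and p :: "real \<Rightarrow> real"
    and \<gamma> C \<alpha> :: real and k :: "nat \<Rightarrow> nat"
  assumes "onb01 \<psi>"
    and "bdd_above {\<bar>\<psi> j x\<bar> | j x. j \<ge> 1 \<and> x \<in> {0..1}}"
    and "\<gamma> > 1" and "C > 0" and "\<alpha> > 0"
    and "p \<in> sobolev_P \<psi> \<gamma> C"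
    and "\<forall>n. k n \<ge> n"
  shows "\<forall>\<epsilon>>0. \<exists>M>0. \<exists>N. \<forall>n\<ge>N.
    {\<omega> \<in> space (joint_law \<psi> \<alpha> \<gamma> p n (k n)).
       L2err01 p (phatZ \<psi> (m_of \<gamma> n) (k n) (snd (snd \<omega>))) > M * real n powr (- (2 * \<gamma>) / (2 * \<gamma> + 1))}
      \<in> sets (joint_law \<psi> \<alpha> \<gamma> p n (k n))
    \<and> measure (joint_law \<psi> \<alpha> \<gamma> p n (k n))
      {\<omega> \<in> space (joint_law \<psi> \<alpha> \<gamma> p n (k n)).
       L2err01 p (phatZ \<psi> (m_of \<gamma> n) (k n) (snd (snd \<omega>))) > M * real n powr (- (2 * \<gamma>) / (2 * \<gamma> + 1))}
      < \<epsilon>"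
proof -
  note ob = assms(1)[unfolded onb01_def set_integral_N01]
  define c0 where "c0 = c0_of \<psi>"
  have bnd: "\<And>j x. j \<ge> 1 \<Longrightarrow> x \<in> {0..1} \<Longrightarrow> \<bar>\<psi> j x\<bar> \<le> c0"
    unfolding c0_def c0_of_def by (rule cSup_upper) (use assms(2) in auto)
  interpret onb \<psi> c0
    by unfold_locales (use ob bnd in auto)
  have c0pos: "c0 > 0"
  proof (rule ccontr)
    assume "\<not> c0 > 0"
    then have "\<And>x. x \<in> space N01 \<Longrightarrow> \<psi> 1 x * \<psi> 1 x = 0" using bnd[of 1] by force
    then have "integral\<^sup>L N01 (\<lambda>x. \<psi> 1 x * \<psi> 1 x) = integral\<^sup>L N01 (\<lambda>x. 0)"
      by (intro Bochner_Integration.integral_cong) auto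
    then show False using psi_orth[of 1 1] by simp
  qed
  note pP = assms(6)[unfolded sobolev_P_def set_integral_N01 set_integrable_N01 mem_Collect_eq]
  obtain \<beta> where sB: "sobolev_B \<gamma> C \<beta>"
    and cv: "(\<lambda>N. integral\<^sup>L N01 (\<lambda>x. (p x - 1 - (\<Sum>j=1..N. \<beta> j * \<psi> j x))\<^sup>2)) \<longlonglongrightarrow> 0"
    using pP by blast
  interpret sob \<psi> c0 p \<beta> \<gamma> C
    by unfold_locales (use pP sB cv assms(3) in auto)
  define Kc where "Kc = (1 + 2 * (2 + C\<^sup>2)) * C\<^sup>2 * 4 powr \<gamma> + c0\<^sup>2 + 2 * (2 * (2 + C\<^sup>2)) * c0\<^sup>2
      + 4 * (2 * (2 + C\<^sup>2)) * c0\<^sup>2 / \<alpha>\<^sup>2"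
  have Kcn: "0 \<le> Kc" unfolding Kc_def using assms(5) by (intro add_nonneg_nonneg) auto
  show ?thesis
  proof (intro allI impI)
    fix \<epsilon> :: real assume e: "\<epsilon> > 0"
    define M where "M = Kc / \<epsilon> + 1"
    have Mp: "M > 0" unfolding M_def using Kcn e by (simp add: add_nonneg_pos)
    have KM: "Kc / M < \<epsilon>"
    proof -
      have "Kc < \<epsilon> * M" unfolding M_def using e by (simp add: algebra_simps)
      then show ?thesis using Mp by (simp add: divide_less_eq mult.commute)
    qed
    show "\<exists>M>0. \<exists>N. \<forall>n\<ge>N.
    {\<omega> \<in> space (joint_law \<psi> \<alpha> \<gamma> p n (k n)).
       L2err01 p (phatZ \<psi> (m_of \<gamma> n) (k n) (snd (snd \<omega>))) > M * real n powr (- (2 * \<gamma>) / (2 * \<gamma> + 1))}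
      \<in> sets (joint_law \<psi> \<alpha> \<gamma> p n (k n))
    \<and> measure (joint_law \<psi> \<alpha> \<gamma> p n (k n))
      {\<omega> \<in> space (joint_law \<psi> \<alpha> \<gamma> p n (k n)).
       L2err01 p (phatZ \<psi> (m_of \<gamma> n) (k n) (snd (snd \<omega>))) > M * real n powr (- (2 * \<gamma>) / (2 * \<gamma> + 1))}
      < \<epsilon>"
    proof (intro exI[of _ M] conjI Mp exI[of _ 1] allI impI)
      fix n :: nat assume n: "1 \<le> n"
      interpret mc: mainctx \<psi> c0 p \<beta> \<gamma> C n "k n" \<alpha>
        by unfold_locales (use n assms(3,5,7) c0pos c0_def in auto)
      have KcE: "mc.Kc = Kc" unfolding mc.Kc_def mc.K1_def Kc_def ..
      note E = mc.event[OF Mp, unfolded KcE]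
      show "{\<omega> \<in> space (joint_law \<psi> \<alpha> \<gamma> p n (k n)).
         L2err01 p (phatZ \<psi> (m_of \<gamma> n) (k n) (snd (snd \<omega>))) > M * real n powr (- (2 * \<gamma>) / (2 * \<gamma> + 1))}
        \<in> sets (joint_law \<psi> \<alpha> \<gamma> p n (k n))" by (rule E(1))
      show "measure (joint_law \<psi> \<alpha> \<gamma> p n (k n))
        {\<omega> \<in> space (joint_law \<psi> \<alpha> \<gamma> p n (k n)).
         L2err01 p (phatZ \<psi> (m_of \<gamma> n) (k n) (snd (snd \<omega>))) > M * real n powr (- (2 * \<gamma>) / (2 * \<gamma> + 1))}
        < \<epsilon>" using E(2) KM by linarith
    qed
  qed
qed


end
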